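(* Under Conditions 1 and 2, for every $k\in\mathbb Z_+$, $\mathbf y=(y_1,\dots,y_k)\in\mathbb R_+^k$ and $u\in\mathbb R$, $$\lim_{n\to\infty}\int_0^\infty e^{\mathrm iut}R^{(n)}_\beta(\gamma_nt,k,\mathbf y)\,dt=\Big(\sum_{j=1}^ky_j\Big)\int_0^\infty e^{\mathrm iut}\frac1\sigma\exp\Big\{-\Big(\frac{b+m}{\sigma\lambda}+\beta\Big)t\Big\}dt .$$
   Context: Notation: $\mathbb Z_+=\{1,2,\dots\}$, $\mathbb R_+=[0,\infty)$. For each $n\ge1$: $\lambda^{(n)}>0$; a probability $\Lambda^{(n)}$ on $\mathbb R_+$ with tail $\bar\Lambda^{(n)}(t)=\Lambda^{(n)}((t,\infty))$, $\eta^{(n)}=\int_0^\infty y\Lambda^{(n)}(dy)$, $\sigma^{(n)}=\frac12\int_0^\infty y^2\Lambda^{(n)}(dy)$ finite; probability laws $(p_k^{(n)})_{k\ge1}$, $(q_k^{(n)})_{k\ge1}$ on $\mathbb Z_+$ with generating functions $g^{(n)},h^{(n)}$, $m^{(n)}=\sum_kkp_k^{(n)}<\infty$; $\gamma_n>0$ with $\gamma_n\to\infty$, $\gamma_n/n\to\gamma_*\in[0,\infty)$. $\phi^{(n)}(z)=n\gamma_n[g^{(n)}(1-z/n)-(1-z/n)]$, $\psi^{(n)}(z)=\gamma_n[1-h^{(n)}(1-z/n)]$ for $z\in[0,n]$. Condition 1: (i) $\lambda^{(n)}\to\lambda>0$, $\eta^{(n)}\to\eta>0$, $\sigma^{(n)}\to\sigma>0$,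 $\gamma_n(1-\lambda^{(n)}\eta^{(n)})\to b\in\mathbb R$; (ii) $\psi^{(n)}\to\psi$ uniformly on compacts of $[0,\infty)$; (iii) $\{\phi^{(n)}\}$ is uniformly Lipschitz on bounded intervals and converges uniformly on compacts to a continuous $\phi$. Under Condition 1, $\lambda\eta=1$ and $m:=\lim_n\gamma_n(1-m^{(n)})$ exists (so $\gamma_n(1-\lambda^{(n)}\eta^{(n)}m^{(n)})\to b+m$). Condition 2 (for some $\alpha\in(1,2)$): (1) there are $C,k_0>0$ with $n\gamma_n\sum_{k\ge k_0}(k/n)^\alpha p^{(n)}_k+\sum_kk^\alpha q^{(n)}_k\le C$ for all $n$, and $\lim_{k_1\to\infty}\limsup_n\gamma_n\sum_{k\ge k_1}kp^{(n)}_k=0$; (2) there are $C_0>0$ and a probability $\Lambda^*$ on $\mathbb R_+$ with $\int t^{2\alpha}\Lambda^*(dt)<\infty$ and $\bar\Lambda^{(n)}\le C_0\bar\Lambda^*$ for all $n$. Fix $\beta\in[0,\infty)$ with $\beta>-(b+m)/(\sigma\lambda)$. Let $R^{(n)}$ be the unique locally integrable solution of $R^{(n)}(t)=\lambda^{(n)}m^{(n)}\bar\Lambda^{(n)}(t)+\lambda^{(n)}m^{(n)}\int_0^tR^{(n)}(t-s)\bar\Lambda^{(n)}(s)ds$, $t\ge0$, and $R^{(n)}_\beta(t)=e^{-\beta t/\gamma_n}R^{(n)}(t)$. For $k\in\mathbb Z_+$, $\mathbf y=(y_1,\dots,y_k)\in\mathbb R_+^k$: $R^{(n)}(t,k,\mathbf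 y)=\sum_{j=1}^k\big[\lambda^{(n)}\mathbf 1_{\{y_j>t\}}+\lambda^{(n)}\int_0^tR^{(n)}(t-s)\mathbf 1_{\{y_j>s\}}ds\big]$ and $R^{(n)}_\beta(t,k,\mathbf y)=e^{-\beta t/\gamma_n}R^{(n)}(t,k,\mathbf y)$. *)

theory Defs
  imports "HOL-Probability.Probability"
begin

definition tail :: "real measure \<Rightarrow> real \<Rightarrow> real" where
  "tail M t = measure M {t<..}"

definition prob_law_Zplus :: "(nat \<Rightarrow> real) \<Rightarrow> bool" where
  "prob_law_Zplus p \<longleftrightarrow> (\<forall>k. 0 \<le> p k) \<and> p 0 = 0 \<and> p sums 1"

definition genfun :: "(nat \<Rightarrow> real) \<Rightarrow> real \<Rightarrow> real" where
  "genfun p s = (\<Sum>k. p k * s ^ k)"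

definition mean_Z :: "(nat \<Rightarrow> real) \<Rightarrow> real" where
  "mean_Z p = (\<Sum>k. real k * p k)"

definition phi_n :: "nat \<Rightarrow> real \<Rightarrow> (nat \<Rightarrow> real) \<Rightarrow> real \<Rightarrow> real" where
  "phi_n n gam p z = real n * gam * (genfun p (1 - z / real n) - (1 - z / real n))"

definition psi_n :: "nat \<Rightarrow> real \<Rightarrow> (nat \<Rightarrow> real) \<Rightarrow> real \<Rightarrow> real" where
  "psi_n n gam q z = gam * (1 - genfun q (1 - z / real n))"

text \<open>\<open>R(t,k,y) = \<Sum>\<^sub>j\<^sub>=\<^sub>1\<^sup>k [\<lambda> 1{y_j>t} + \<lambda> \<integral>\<^sub>0\<^sup>t R(t-s) 1{y_j>s} ds]\<close>;
  the vector \<open>y \<in> \<real>\<^sub>+\<^sup>k\<close> is a function on nat, only \<open>y 1, ..., y k\<close> matter.\<close>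
definition Rky :: "real \<Rightarrow> (real \<Rightarrow> real) \<Rightarrow> nat \<Rightarrow> (nat \<Rightarrow> real) \<Rightarrow> real \<Rightarrow> real" where
  "Rky lam R k y t =
     (\<Sum>j=1..k. lam * (if y j > t then 1 else 0)
        + lam * set_lebesgue_integral lborel {0..t} (\<lambda>s. R (t - s) * (if y j > s then 1 else 0)))"

definition Rky_beta :: "real \<Rightarrow> real \<Rightarrow> real \<Rightarrow> (real \<Rightarrow> real) \<Rightarrow> nat \<Rightarrow> (nat \<Rightarrow> real) \<Rightarrow> real \<Rightarrow> real" where
  "Rky_beta beta gam lam R k y t = exp (- beta * t / gam) * Rky lam R k y t"

end

theory Submission
  imports Defs
begin


lemma sets_lborel_pair[measurable_cong]: "sets (lborel \<Otimes>\<^sub>M lborel) = sets (borel \<Otimes>\<^sub>M (borel :: real measure))"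
  by (rule sets_pair_measure_cong) simp_all

lemma pred_in_atLeast[measurable (raw)]:
  assumes [measurable]: "f \<in> borel_measurable M" "g \<in> borel_measurable M"
  shows "Measurable.pred M (\<lambda>x. (f x::real) \<in> {g x..})"
  unfolding atLeast_iff by measurable

lemma pred_in_atLeastAtMost[measurable (raw)]:
  assumes [measurable]: "f \<in> borel_measurable M" "g \<in> borel_measurable M" "h \<in> borel_measurable M"
  shows "Measurable.pred M (\<lambda>x. (f x::real) \<in> {g x..h x})"
  unfolding atLeastAtMost_iff by measurable

lemma tonelli_conv:
  fixes F G :: "real \<Rightarrow> ennreal"
  assumes [measurable]: "F \<in> borel_measurable borel" "G \<in> borel_measurable borel"
  shows "(\<integral>\<^sup>+t. \<integral>\<^sup>+v. indicator {0..} v * indicator {v..} t * F (t - v) * G v \<partial>lborel \<partial>lborel)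
        = (\<integral>\<^sup>+w. indicator {0..} w * F w \<partial>lborel) * (\<integral>\<^sup>+v. indicator {0..} v * G v \<partial>lborel)"
proof -
  have "(\<integral>\<^sup>+t. \<integral>\<^sup>+v. indicator {0..} v * indicator {v..} t * F (t - v) * G v \<partial>lborel \<partial>lborel)
     = (\<integral>\<^sup>+v. \<integral>\<^sup>+t. indicator {0..} v * indicator {v..} t * F (t - v) * G v \<partial>lborel \<partial>lborel)"
  proof (rule lborel_pair.Fubini')
    have "(\<lambda>(v,t). indicator {0..} v * indicator {v..} t * F (t - v) * G v) \<in> borel_measurable (borel \<Otimes>\<^sub>M borel)"
      unfolding indicator_def atLeast_iff by measurable
    then show "(\<lambda>(v,t). indicator {0..} v * indicator {v..} t * F (t - v) * G v) \<in> borel_measurable (lborel \<Otimes>\<^sub>M lborel)"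
      by (simp add: measurable_cong_sets[OF sets_pair_measure_cong[OF sets_lborel sets_lborel] refl])
  qed
  also have "\<dots> = (\<integral>\<^sup>+v. (indicator {0..} v * G v) * (\<integral>\<^sup>+w. indicator {0..} w * F w \<partial>lborel) \<partial>lborel)"
  proof (rule nn_integral_cong)
    fix v :: real
    have "(\<integral>\<^sup>+t. indicator {0..} v * indicator {v..} t * F (t - v) * G v \<partial>lborel)
        = (\<integral>\<^sup>+t. (indicator {0..} v * G v) * (indicator {v..} t * F (t - v)) \<partial>lborel)"
      by (intro nn_integral_cong) (simp add: mult_ac)
    also have "\<dots> = (indicator {0..} v * G v) * (\<integral>\<^sup>+t. indicator {v..} t * F (t - v) \<partial>lborel)"
      by (rule nn_integral_cmult) measurable
    also have "(\<integral>\<^sup>+t. indicator {v..} t * F (t - v) \<partial>lborel)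
        = (\<integral>\<^sup>+w. indicator {v..} (v + 1 * w) * F ((v + 1 * w) - v) \<partial>lborel)"
      using nn_integral_real_affine[of "\<lambda>t. indicator {v..} t * F (t - v)" 1 v] by simp
    also have "\<dots> = (\<integral>\<^sup>+w. indicator {0..} w * F w \<partial>lborel)"
      by (intro nn_integral_cong) (simp add: indicator_def)
    finally show "(\<integral>\<^sup>+t. indicator {0..} v * indicator {v..} t * F (t - v) * G v \<partial>lborel)
        = (indicator {0..} v * G v) * (\<integral>\<^sup>+w. indicator {0..} w * F w \<partial>lborel)" .
  qed
  also have "\<dots> = (\<integral>\<^sup>+v. indicator {0..} v * G v \<partial>lborel) * (\<integral>\<^sup>+w. indicator {0..} w * F w \<partial>lborel)"
    by (rule nn_integral_multc) measurable
  finally show ?thesis by (simp add: mult.commute)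
qed


lemma renewal_bound:
  fixes R f :: "real \<Rightarrow> real" and a K :: real
  assumes Rm[measurable]: "R \<in> borel_measurable borel" and fm[measurable]: "f \<in> borel_measurable borel"
    and f0: "\<And>t. 0 \<le> f t" and a0: "0 \<le> a" and K0: "0 \<le> K" and K1: "K < 1"
    and loc: "\<And>T. set_integrable lborel {0..T} R"
    and eq: "\<And>t. 0 \<le> t \<Longrightarrow> ennreal \<bar>R t\<bar> \<le> ennreal (f t)
              + (\<integral>\<^sup>+v. indicator {0..} v * indicator {v..} t * ennreal \<bar>R (t - v)\<bar> * ennreal (f v) \<partial>lborel)"
    and Kb: "(\<integral>\<^sup>+v. indicator {0..} v * ennreal (exp (- a * v) * f v) \<partial>lborel) \<le> ennreal K"
  shows "(\<integral>\<^sup>+t. indicator {0..} t * ennreal (exp (- a * t) * \<bar>R t\<bar>) \<partial>lborel) \<le> ennreal (K / (1 - K))"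
proof -
  define I where "I T = (\<integral>\<^sup>+t. indicator {0..T} t * ennreal (exp (- a * t) * \<bar>R t\<bar>) \<partial>lborel)" for T :: real
  have Ifin: "I T < \<infinity>" for T
  proof -
    have "I T \<le> (\<integral>\<^sup>+t. ennreal (norm (indicator {0..T} t *\<^sub>R R t)) \<partial>lborel)"
      unfolding I_def
    proof (intro nn_integral_mono)
      fix t
      show "indicator {0..T} t * ennreal (exp (- a * t) * \<bar>R t\<bar>) \<le> ennreal (norm (indicator {0..T} t *\<^sub>R R t))"
      proof (cases "t \<in> {0..T}")
        case True
        then have "exp (- a * t) \<le> 1" using a0 by auto
        then have "exp (- a * t) * \<bar>R t\<bar> \<le> \<bar>R t\<bar>" by (simp add: mult_left_le_one_le)
        then show ?thesis using True by (simp add: ennreal_leI)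
      qed simp
    qed
    also have "\<dots> < \<infinity>" using loc[of T] unfolding set_integrable_def integrable_iff_bounded by simp
    finally show ?thesis .
  qed
  have Ib: "I T \<le> ennreal K + ennreal K * I T" for T
  proof -
    have "I T \<le> (\<integral>\<^sup>+t. indicator {0..} t * ennreal (exp (- a * t) * f t)
        + (\<integral>\<^sup>+v. indicator {0..} v * indicator {v..} t * (indicator {0..T} (t - v) * ennreal (exp (- a * (t-v)) * \<bar>R (t - v)\<bar>)) * ennreal (exp (- a * v) * f v) \<partial>lborel) \<partial>lborel)"
      unfolding I_def
    proof (intro nn_integral_mono)
      fix t
      show "indicator {0..T} t * ennreal (exp (- a * t) * \<bar>R t\<bar>) \<le> indicator {0..} t * ennreal (exp (- a * t) * f t)
        + (\<integral>\<^sup>+v. indicator {0..} v * indicator {v..} t * (indicator {0..T} (t - v) * ennreal (exp (- a * (t-v)) * \<bar>R (t - v)\<bar>)) * ennreal (exp (- a * v) * f v) \<partial>lborel)"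
      proof (cases "t \<in> {0..T}")
        case True
        have "ennreal (exp (- a * t) * \<bar>R t\<bar>) = ennreal (exp (- a * t)) * ennreal \<bar>R t\<bar>"
          by (simp add: ennreal_mult)
        also have "\<dots> \<le> ennreal (exp (- a * t)) * (ennreal (f t)
              + (\<integral>\<^sup>+v. indicator {0..} v * indicator {v..} t * ennreal \<bar>R (t - v)\<bar> * ennreal (f v) \<partial>lborel))"
          using eq[of t] True by (intro mult_left_mono) auto
        also have "\<dots> = ennreal (exp (- a * t) * f t) + (\<integral>\<^sup>+v. ennreal (exp (- a * t)) * (indicator {0..} v * indicator {v..} t * ennreal \<bar>R (t - v)\<bar> * ennreal (f v)) \<partial>lborel)"
          proof -
          have m1: "(\<lambda>x. ennreal \<bar>R (t - x)\<bar>) \<in> borel_measurable lborel" by measurable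
          have m2: "(\<lambda>v. indicator {0..} v * indicator {v..} t * ennreal \<bar>R (t - v)\<bar> * ennreal (f v)) \<in> borel_measurable borel"
            unfolding indicator_def atLeast_iff by measurable
          show ?thesis by (subst nn_integral_cmult) (use m1 m2 in \<open>auto simp: distrib_left ennreal_mult f0\<close>)
        qed
        also have "(\<integral>\<^sup>+v. ennreal (exp (- a * t)) * (indicator {0..} v * indicator {v..} t * ennreal \<bar>R (t - v)\<bar> * ennreal (f v)) \<partial>lborel)
            = (\<integral>\<^sup>+v. indicator {0..} v * indicator {v..} t * (indicator {0..T} (t - v) * ennreal (exp (- a * (t-v)) * \<bar>R (t - v)\<bar>)) * ennreal (exp (- a * v) * f v) \<partial>lborel)"
        proof (intro nn_integral_cong)
          fix v
          show "ennreal (exp (- a * t)) * (indicator {0..} v * indicator {v..} t * ennreal \<bar>R (t - v)\<bar> * ennreal (f v))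
            = indicator {0..} v * indicator {v..} t * (indicator {0..T} (t - v) * ennreal (exp (- a * (t-v)) * \<bar>R (t - v)\<bar>)) * ennreal (exp (- a * v) * f v)"
          proof (cases "0 \<le> v \<and> v \<le> t")
            case True2: True
            have e: "ennreal (exp (- (a * t))) = ennreal (exp (- (a * v))) * ennreal (exp (- (a * (t - v))))"
              by (simp add: ennreal_mult[symmetric] exp_add[symmetric] algebra_simps)
            show ?thesis using True True2 by (simp add: e ennreal_mult f0 indicator_def mult_ac)
          qed (auto simp: indicator_def)
        qed
        finally show ?thesis using True by simp
      qed simp
    qed
    also have "\<dots> = (\<integral>\<^sup>+t. indicator {0..} t * ennreal (exp (- a * t) * f t) \<partial>lborel)
        + (\<integral>\<^sup>+t. \<integral>\<^sup>+v. indicator {0..} v * indicator {v..} t * (indicator {0..T} (t - v) * ennreal (exp (- a * (t-v)) * \<bar>R (t - v)\<bar>)) * ennreal (exp (- a * v) * f v) \<partial>lborel \<partial>lborel)"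
      by (rule nn_integral_add) measurable
    also have "(\<integral>\<^sup>+t. \<integral>\<^sup>+v. indicator {0..} v * indicator {v..} t * (indicator {0..T} (t - v) * ennreal (exp (- a * (t-v)) * \<bar>R (t - v)\<bar>)) * ennreal (exp (- a * v) * f v) \<partial>lborel \<partial>lborel)
       = (\<integral>\<^sup>+w. indicator {0..} w * (indicator {0..T} w * ennreal (exp (- a * w) * \<bar>R w\<bar>)) \<partial>lborel) * (\<integral>\<^sup>+v. indicator {0..} v * ennreal (exp (- a * v) * f v) \<partial>lborel)"
      by (rule tonelli_conv[of "\<lambda>w. indicator {0..T} w * ennreal (exp (- a * w) * \<bar>R w\<bar>)" "\<lambda>v. ennreal (exp (- a * v) * f v)"]) measurable
    also have "(\<integral>\<^sup>+w. indicator {0..} w * (indicator {0..T} w * ennreal (exp (- a * w) * \<bar>R w\<bar>)) \<partial>lborel) = I T"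
      unfolding I_def by (intro nn_integral_cong) (simp add: indicator_def)
    finally have "I T \<le> (\<integral>\<^sup>+t. indicator {0..} t * ennreal (exp (- a * t) * f t) \<partial>lborel) + I T * (\<integral>\<^sup>+v. indicator {0..} v * ennreal (exp (- a * v) * f v) \<partial>lborel)" .
    also have "\<dots> \<le> ennreal K + I T * ennreal K"
      using Kb by (intro add_mono mult_left_mono) auto
    finally show ?thesis by (simp add: mult.commute)
  qed
  have Ir: "I T \<le> ennreal (K / (1 - K))" for T
  proof -
    obtain x where x: "I T = ennreal x" "0 \<le> x" using Ifin[of T]
      by (metis ennreal_cases less_irrefl top.extremum_strict ennreal_enn2real_if enn2real_nonneg)
    have e: "ennreal K + ennreal K * I T = ennreal (K + K * x)" using x K0
      by (subst ennreal_plus) (auto simp: ennreal_mult)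
    have "ennreal x \<le> ennreal (K + K * x)" using Ib[of T] x e by simp
    then have "x \<le> K + K * x" using K0 x by (metis ennreal_le_iff add_nonneg_nonneg mult_nonneg_nonneg)
    then have "x * (1 - K) \<le> K" by (simp add: algebra_simps)
    then have "x \<le> K / (1 - K)" using K1 by (simp add: le_divide_eq)
    then show ?thesis using x by (simp add: ennreal_leI)
  qed
  have "(\<integral>\<^sup>+t. indicator {0..} t * ennreal (exp (- a * t) * \<bar>R t\<bar>) \<partial>lborel)
      = (\<integral>\<^sup>+t. (SUP i::nat. indicator {0..real i} t * ennreal (exp (- a * t) * \<bar>R t\<bar>)) \<partial>lborel)"
  proof (intro nn_integral_cong)
    fix t :: real
    show "indicator {0..} t * ennreal (exp (- a * t) * \<bar>R t\<bar>) = (SUP i::nat. indicator {0..real i} t * ennreal (exp (- a * t) * \<bar>R t\<bar>))"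
    proof (rule antisym)
      obtain i :: nat where "t \<le> real i" using real_arch_simple by blast
      then have "indicator {0..} t * ennreal (exp (- a * t) * \<bar>R t\<bar>) = indicator {0..real i} t * ennreal (exp (- a * t) * \<bar>R t\<bar>)"
        by (simp add: indicator_def)
      then show "indicator {0..} t * ennreal (exp (- a * t) * \<bar>R t\<bar>) \<le> (SUP i::nat. indicator {0..real i} t * ennreal (exp (- a * t) * \<bar>R t\<bar>))"
        by (metis (no_types, lifting) SUP_upper UNIV_I)
      show "(SUP i::nat. indicator {0..real i} t * ennreal (exp (- a * t) * \<bar>R t\<bar>)) \<le> indicator {0..} t * ennreal (exp (- a * t) * \<bar>R t\<bar>)"
        by (intro SUP_least) (simp add: indicator_def)
    qed
  qed
  also have "\<dots> = (SUP i::nat. I (real i))"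
    unfolding I_def
    by (rule nn_integral_monotone_convergence_SUP) (auto simp: incseq_def le_fun_def indicator_def intro!: mult_right_mono)
  also have "\<dots> \<le> ennreal (K / (1 - K))" by (intro SUP_least Ir)
  finally show ?thesis .
qed


lemma laplace_conv:
  fixes R g :: "real \<Rightarrow> real" and s :: complex
  assumes [measurable]: "R \<in> borel_measurable borel" "g \<in> borel_measurable borel"
    and iR: "integrable lborel (\<lambda>t. indicator {0..} t * (exp (- Re s * t) * \<bar>R t\<bar>))"
    and ig: "integrable lborel (\<lambda>t. indicator {0..} t * (exp (- Re s * t) * \<bar>g t\<bar>))"
  shows "set_integrable lborel {0..} (\<lambda>t. exp (- s * of_real t) * of_real (set_lebesgue_integral lborel {0..t} (\<lambda>v. R (t - v) * g v)))"
    and "set_lebesgue_integral lborel {0..} (\<lambda>t. exp (- s * of_real t) * of_real (set_lebesgue_integral lborel {0..t} (\<lambda>v. R (t - v) * g v)))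
        = set_lebesgue_integral lborel {0..} (\<lambda>t. exp (- s * of_real t) * of_real (R t))
          * set_lebesgue_integral lborel {0..} (\<lambda>t. exp (- s * of_real t) * of_real (g t))"
proof -
  define a where "a = Re s"
  define H where "H t v = (indicator {0..} v * indicator {v..} t :: real) *\<^sub>R (exp (- s * of_real t) * of_real (R (t - v) * g v))" for t v
  have Hm[measurable]: "case_prod H \<in> borel_measurable (lborel \<Otimes>\<^sub>M lborel)" unfolding H_def by measurable
  have nH: "ennreal (norm (H t v)) = indicator {0..} v * indicator {v..} t * ennreal (exp (- a * (t - v)) * \<bar>R (t - v)\<bar>) * ennreal (exp (- a * v) * \<bar>g v\<bar>)" for t v
  proof -
    have e: "exp (- (a * t)) = exp (- (a * v)) * exp (- (a * (t - v)))" by (simp add: exp_add[symmetric] algebra_simps)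
    show ?thesis unfolding H_def
      by (simp add: norm_mult norm_exp_eq_Re abs_mult a_def[symmetric] e ennreal_mult[symmetric] indicator_def mult_ac)
  qed
  have fin1: "(\<integral>\<^sup>+t. indicator {0..} t * ennreal (exp (- a * t) * \<bar>R t\<bar>) \<partial>lborel) < \<infinity>"
  proof -
    have "(\<integral>\<^sup>+t. indicator {0..} t * ennreal (exp (- a * t) * \<bar>R t\<bar>) \<partial>lborel)
        = (\<integral>\<^sup>+t. ennreal (norm (indicator {0..} t * (exp (- Re s * t) * \<bar>R t\<bar>))) \<partial>lborel)"
      by (intro nn_integral_cong) (simp add: indicator_def a_def)
    also have "\<dots> < \<infinity>" using iR unfolding integrable_iff_bounded by simp
    finally show ?thesis .
  qed
  have fin2: "(\<integral>\<^sup>+t. indicator {0..} t * ennreal (exp (- a * t) * \<bar>g t\<bar>) \<partial>lborel) < \<infinity>"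
  proof -
    have "(\<integral>\<^sup>+t. indicator {0..} t * ennreal (exp (- a * t) * \<bar>g t\<bar>) \<partial>lborel)
        = (\<integral>\<^sup>+t. ennreal (norm (indicator {0..} t * (exp (- Re s * t) * \<bar>g t\<bar>))) \<partial>lborel)"
      by (intro nn_integral_cong) (simp add: indicator_def a_def)
    also have "\<dots> < \<infinity>" using ig unfolding integrable_iff_bounded by simp
    finally show ?thesis .
  qed
  have Hint: "integrable (lborel \<Otimes>\<^sub>M lborel) (case_prod H)"
  proof (rule integrableI_bounded)
    show "case_prod H \<in> borel_measurable (lborel \<Otimes>\<^sub>M lborel)" by (rule Hm)
    have "(\<integral>\<^sup>+p. ennreal (norm (case_prod H p)) \<partial>(lborel \<Otimes>\<^sub>M lborel))
        = (\<integral>\<^sup>+t. \<integral>\<^sup>+v. ennreal (norm (H t v)) \<partial>lborel \<partial>lborel)"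
    proof -
      have "(\<lambda>p. ennreal (norm (case_prod H p))) \<in> borel_measurable (lborel \<Otimes>\<^sub>M lborel)" using Hm by measurable
      from lborel.nn_integral_fst[OF this] show ?thesis by simp
    qed
    also have "\<dots> = (\<integral>\<^sup>+t. \<integral>\<^sup>+v. indicator {0..} v * indicator {v..} t * ennreal (exp (- a * (t - v)) * \<bar>R (t - v)\<bar>) * ennreal (exp (- a * v) * \<bar>g v\<bar>) \<partial>lborel \<partial>lborel)"
      by (simp add: nH)
    also have "\<dots> = (\<integral>\<^sup>+t. indicator {0..} t * ennreal (exp (- a * t) * \<bar>R t\<bar>) \<partial>lborel) * (\<integral>\<^sup>+t. indicator {0..} t * ennreal (exp (- a * t) * \<bar>g t\<bar>) \<partial>lborel)"
      by (rule tonelli_conv) measurable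
    also have "\<dots> < \<infinity>" using fin1 fin2 by (simp add: ennreal_mult_less_top)
    finally show "(\<integral>\<^sup>+p. ennreal (norm (case_prod H p)) \<partial>(lborel \<Otimes>\<^sub>M lborel)) < \<infinity>" .
  qed
  have inner_v: "(\<integral>v. H t v \<partial>lborel) = indicator {0..} t *\<^sub>R (exp (- s * of_real t) * of_real (set_lebesgue_integral lborel {0..t} (\<lambda>v. R (t - v) * g v)))" for t
  proof -
    have "(\<integral>v. H t v \<partial>lborel) = (\<integral>v. exp (- s * of_real t) * of_real (indicator {0..t} v *\<^sub>R (R (t - v) * g v)) \<partial>lborel)"
      unfolding H_def by (intro Bochner_Integration.integral_cong) (auto simp: indicator_def)
    also have "\<dots> = exp (- s * of_real t) * of_real (set_lebesgue_integral lborel {0..t} (\<lambda>v. R (t - v) * g v))"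
      by (simp only: integral_mult_right_zero set_lebesgue_integral_def integral_complex_of_real)
    finally show ?thesis
      by (cases "0 \<le> t") (auto simp: indicator_def set_lebesgue_integral_def)
  qed
  define LR where "LR = set_lebesgue_integral lborel {0..} (\<lambda>t. exp (- s * of_real t) * of_real (R t))"
  have inner_t: "(\<integral>t. H t v \<partial>lborel) = (indicator {0..} v *\<^sub>R (exp (- s * of_real v) * of_real (g v))) * LR" for v
  proof -
    have "(\<integral>t. H t v \<partial>lborel) = \<bar>1\<bar> *\<^sub>R (\<integral>x. H (v + 1 * x) v \<partial>lborel)"
      by (rule lborel_integral_real_affine) simp
    also have "\<dots> = (\<integral>x. (indicator {0..} v *\<^sub>R (exp (- s * of_real v) * of_real (g v))) * (indicator {0..} x *\<^sub>R (exp (- s * of_real x) * of_real (R x))) \<partial>lborel)"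
    proof -
      have "H (v + 1 * x) v = (indicator {0..} v *\<^sub>R (exp (- s * of_real v) * of_real (g v))) * (indicator {0..} x *\<^sub>R (exp (- s * of_real x) * of_real (R x)))" for x
        unfolding H_def by (simp add: indicator_def exp_add[symmetric] algebra_simps)
      then show ?thesis by simp
    qed
    also have "\<dots> = (indicator {0..} v *\<^sub>R (exp (- s * of_real v) * of_real (g v))) * LR"
      by (simp only: integral_mult_right_zero LR_def set_lebesgue_integral_def)
    finally show ?thesis .
  qed
  have F: "(\<integral>v. \<integral>t. H t v \<partial>lborel \<partial>lborel) = (\<integral>t. \<integral>v. H t v \<partial>lborel \<partial>lborel)"
    using lborel_pair.Fubini_integral[OF Hint] .
  have I1: "integrable lborel (\<lambda>t. \<integral>v. H t v \<partial>lborel)"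
    using lborel_pair.integrable_fst[OF Hint] .
  show "set_integrable lborel {0..} (\<lambda>t. exp (- s * of_real t) * of_real (set_lebesgue_integral lborel {0..t} (\<lambda>v. R (t - v) * g v)))"
    using I1 unfolding set_integrable_def inner_v .
  show "set_lebesgue_integral lborel {0..} (\<lambda>t. exp (- s * of_real t) * of_real (set_lebesgue_integral lborel {0..t} (\<lambda>v. R (t - v) * g v)))
        = set_lebesgue_integral lborel {0..} (\<lambda>t. exp (- s * of_real t) * of_real (R t))
          * set_lebesgue_integral lborel {0..} (\<lambda>t. exp (- s * of_real t) * of_real (g t))"
  proof -
    have "set_lebesgue_integral lborel {0..} (\<lambda>t. exp (- s * of_real t) * of_real (set_lebesgue_integral lborel {0..t} (\<lambda>v. R (t - v) * g v)))
        = (\<integral>t. \<integral>v. H t v \<partial>lborel \<partial>lborel)"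
      unfolding set_lebesgue_integral_def inner_v ..
    also have "\<dots> = (\<integral>v. (indicator {0..} v *\<^sub>R (exp (- s * of_real v) * of_real (g v))) * LR \<partial>lborel)"
      unfolding F[symmetric] inner_t ..
    also have "\<dots> = set_lebesgue_integral lborel {0..} (\<lambda>t. exp (- s * of_real t) * of_real (g t)) * LR"
      by (simp only: integral_mult_left_zero set_lebesgue_integral_def)
    finally show ?thesis by (simp add: LR_def mult.commute)
  qed
qed



lemma pred_in_greaterThan[measurable (raw)]:
  assumes [measurable]: "f \<in> borel_measurable M" "g \<in> borel_measurable M"
  shows "Measurable.pred M (\<lambda>x. (f x::real) \<in> {g x<..})"
  unfolding greaterThan_iff by measurable

lemma tail_nn_moment:
  fixes M :: "real measure" and w W :: "real \<Rightarrow> real"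
  assumes Mp: "prob_space M" and Ms: "sets M = sets borel" and M0: "measure M {..<0} = 0"
    and [measurable]: "w \<in> borel_measurable borel"
    and w0: "\<And>t. 0 \<le> t \<Longrightarrow> 0 \<le> w t"
    and Wi: "\<And>x. 0 \<le> x \<Longrightarrow> (w has_integral W x) {0..x}"
  shows "(\<integral>\<^sup>+t. indicator {0..} t * ennreal (w t * tail M t) \<partial>lborel) = (\<integral>\<^sup>+x. ennreal (W x) \<partial>M)"
proof -
  interpret prob_space M by (rule Mp)
  interpret P: pair_sigma_finite lborel M ..
  have ae: "AE x in M. 0 \<le> x"
  proof -
    have "{..<0} \<in> null_sets M" using M0 Ms by (simp add: null_sets_def emeasure_eq_measure)
    from AE_not_in[OF this] show ?thesis by (auto elim: eventually_mono)
  qed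
  have meas: "(\<lambda>(t, x). indicator {0..} t * ennreal (w t) * indicator {t<..} x) \<in> borel_measurable (lborel \<Otimes>\<^sub>M M)"
  proof -
    have "(\<lambda>(t, x). indicator {0..} t * ennreal (w t) * indicator {t<..} (x::real)) \<in> borel_measurable (borel \<Otimes>\<^sub>M borel)"
      by measurable
    then show ?thesis
      by (simp add: measurable_cong_sets[OF sets_pair_measure_cong[OF sets_lborel Ms] refl])
  qed
  have "(\<integral>\<^sup>+t. indicator {0..} t * ennreal (w t * tail M t) \<partial>lborel)
      = (\<integral>\<^sup>+t. \<integral>\<^sup>+x. indicator {0..} t * ennreal (w t) * indicator {t<..} x \<partial>M \<partial>lborel)"
  proof (intro nn_integral_cong)
    fix t :: real
    have st: "{t<..} \<in> sets M" using Ms by simp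
    show "indicator {0..} t * ennreal (w t * tail M t) = (\<integral>\<^sup>+x. indicator {0..} t * ennreal (w t) * indicator {t<..} x \<partial>M)"
    proof (cases "0 \<le> t")
      case True
      have "(\<integral>\<^sup>+x. indicator {0..} t * ennreal (w t) * indicator {t<..} x \<partial>M) = (indicator {0..} t * ennreal (w t)) * emeasure M {t<..}"
      proof -
        have mi: "(\<lambda>x. indicator {t<..} x :: ennreal) \<in> borel_measurable M"
          using st by (rule borel_measurable_indicator)
        show ?thesis using st mi by (subst nn_integral_cmult) auto
      qed
      then show ?thesis using True w0[of t]
        by (simp add: tail_def emeasure_eq_measure ennreal_mult)
    qed (simp add: indicator_def)
  qed
  also have "\<dots> = (\<integral>\<^sup>+x. \<integral>\<^sup>+t. indicator {0..} t * ennreal (w t) * indicator {t<..} x \<partial>lborel \<partial>M)"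
    by (rule P.Fubini'[symmetric]) (use meas in simp)
  also have "\<dots> = (\<integral>\<^sup>+x. ennreal (W x) \<partial>M)"
  proof (intro nn_integral_cong_AE)
    show "AE x in M. (\<integral>\<^sup>+t. indicator {0..} t * ennreal (w t) * indicator {t<..} x \<partial>lborel) = ennreal (W x)"
      using ae
    proof eventually_elim
      fix x :: real assume x: "0 \<le> x"
      have "(\<integral>\<^sup>+t. indicator {0..} t * ennreal (w t) * indicator {t<..} x \<partial>lborel)
          = (\<integral>\<^sup>+t. ennreal (indicator {0..x} t * w t) \<partial>lborel)"
      proof (intro nn_integral_cong_AE)
        show "AE t in lborel. indicator {0..} t * ennreal (w t) * indicator {t<..} x = ennreal (indicator {0..x} t * w t)"
          using AE_lborel_singleton[of x] by eventually_elim (auto simp: indicator_def)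
      qed
      also have "\<dots> = ennreal (W x)"
        by (rule nn_integral_has_integral_lebesgue) (use w0 Wi x in auto)
      finally show "(\<integral>\<^sup>+t. indicator {0..} t * ennreal (w t) * indicator {t<..} x \<partial>lborel) = ennreal (W x)" .
    qed
  qed
  finally show ?thesis .
qed


lemma tail_weighted:
  fixes M :: "real measure" and w W :: "real \<Rightarrow> real"
  assumes Mp: "prob_space M" and Ms: "sets M = sets borel" and M0: "measure M {..<0} = 0"
    and wm[measurable]: "w \<in> borel_measurable borel" and tm[measurable]: "tail M \<in> borel_measurable borel"
    and w0: "\<And>t. 0 \<le> t \<Longrightarrow> 0 \<le> w t"
    and Wi: "\<And>x. 0 \<le> x \<Longrightarrow> (w has_integral W x) {0..x}"
    and iW: "integrable M W"
  shows "set_integrable lborel {0..} (\<lambda>t. w t * tail M t)"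
    and "set_lebesgue_integral lborel {0..} (\<lambda>t. w t * tail M t) = (\<integral>x. W x \<partial>M)"
proof -
  interpret prob_space M by (rule Mp)
  have ae: "AE x in M. 0 \<le> x"
  proof -
    have "{..<0} \<in> null_sets M" using M0 Ms by (simp add: null_sets_def emeasure_eq_measure)
    from AE_not_in[OF this] show ?thesis by (auto elim: eventually_mono)
  qed
  have W0: "AE x in M. 0 \<le> W x" using ae
  proof eventually_elim
    fix x :: real assume "0 \<le> x"
    then show "0 \<le> W x" using Wi[of x] w0 by (intro has_integral_nonneg[OF Wi[of x]]) auto
  qed
  have tnn: "0 \<le> tail M t" for t unfolding tail_def by simp
  have eqn: "(\<integral>\<^sup>+t. ennreal (indicator {0..} t * (w t * tail M t)) \<partial>lborel) = ennreal (\<integral>x. W x \<partial>M)"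
  proof -
    have "(\<integral>\<^sup>+t. ennreal (indicator {0..} t * (w t * tail M t)) \<partial>lborel) = (\<integral>\<^sup>+t. indicator {0..} t * ennreal (w t * tail M t) \<partial>lborel)"
      by (intro nn_integral_cong) (simp add: indicator_def)
    also have "\<dots> = (\<integral>\<^sup>+x. ennreal (W x) \<partial>M)"
      by (rule tail_nn_moment[OF Mp Ms M0 wm w0 Wi])
    also have "\<dots> = ennreal (\<integral>x. W x \<partial>M)"
      by (rule nn_integral_eq_integral[OF iW W0])
    finally show ?thesis .
  qed
  show si: "set_integrable lborel {0..} (\<lambda>t. w t * tail M t)"
    unfolding set_integrable_def
  proof (rule integrableI_bounded)
    show "(\<lambda>t. indicat_real {0..} t *\<^sub>R (w t * tail M t)) \<in> borel_measurable lborel" by measurable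
    have "(\<integral>\<^sup>+t. ennreal (norm (indicat_real {0..} t *\<^sub>R (w t * tail M t))) \<partial>lborel)
        = (\<integral>\<^sup>+t. ennreal (indicator {0..} t * (w t * tail M t)) \<partial>lborel)"
      using w0 tnn by (intro nn_integral_cong) (auto simp: indicator_def)
    then show "(\<integral>\<^sup>+t. ennreal (norm (indicat_real {0..} t *\<^sub>R (w t * tail M t))) \<partial>lborel) < \<infinity>"
      using eqn by simp
  qed
  have "set_lebesgue_integral lborel {0..} (\<lambda>t. w t * tail M t) = enn2real (\<integral>\<^sup>+t. ennreal (indicator {0..} t * (w t * tail M t)) \<partial>lborel)"
    unfolding set_lebesgue_integral_def
    by (subst integral_eq_nn_integral) (use w0 tnn in \<open>auto simp: indicator_def\<close>)
  also have "\<dots> = (\<integral>x. W x \<partial>M)" using eqn integral_nonneg_AE[OF W0] by simp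
  finally show "set_lebesgue_integral lborel {0..} (\<lambda>t. w t * tail M t) = (\<integral>x. W x \<partial>M)" .
qed

lemma tail_basic:
  fixes M :: "real measure"
  assumes Mp: "prob_space M" and Ms: "sets M = sets borel"
  shows "tail M \<in> borel_measurable borel" "\<And>t. 0 \<le> tail M t" "\<And>t. tail M t \<le> 1"
    "\<And>s t. s \<le> t \<Longrightarrow> tail M t \<le> tail M s"
proof -
  interpret prob_space M by (rule Mp)
  show anti: "\<And>s t. s \<le> t \<Longrightarrow> tail M t \<le> tail M s"
    unfolding tail_def by (rule finite_measure_mono) (auto simp: Ms)
  show "\<And>t. 0 \<le> tail M t" unfolding tail_def by simp
  show "\<And>t. tail M t \<le> 1" unfolding tail_def by simp
  have "mono (\<lambda>t. - tail M t)" using anti by (auto simp: mono_def)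
  then have "(\<lambda>t. - tail M t) \<in> borel_measurable borel" by (rule borel_measurable_mono)
  then have "(\<lambda>t. - (- tail M t)) \<in> borel_measurable borel" by measurable
  then show "tail M \<in> borel_measurable borel" by simp
qed

lemma tail_moments:
  fixes M :: "real measure"
  assumes Mp: "prob_space M" and Ms: "sets M = sets borel" and M0: "measure M {..<0} = 0"
    and i1: "integrable M (\<lambda>x. x)" and i2: "integrable M (\<lambda>x. x ^ 2)"
  shows "set_integrable lborel {0..} (tail M)"
    and "set_lebesgue_integral lborel {0..} (tail M) = (\<integral>x. x \<partial>M)"
    and "set_integrable lborel {0..} (\<lambda>t. t * tail M t)"
    and "set_lebesgue_integral lborel {0..} (\<lambda>t. t * tail M t) = (1/2) * (\<integral>x. x ^ 2 \<partial>M)"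
proof -
  note tm = tail_basic(1)[OF Mp Ms]
  have W1: "((\<lambda>t. 1) has_integral x) {0..x}" if "0 \<le> x" for x :: real
    using has_integral_const_real[of "1::real" 0 x] that by simp
  have W2: "((\<lambda>t. t) has_integral x^2 / 2) {0..x}" if "0 \<le> x" for x :: real
    using ident_has_integral[of 0 x] that by simp
  have i2': "integrable M (\<lambda>x. x ^ 2 / 2)" using i2 by simp
  have A: "set_integrable lborel {0..} (\<lambda>t. 1 * tail M t)"
       "set_lebesgue_integral lborel {0..} (\<lambda>t. 1 * tail M t) = (\<integral>x. x \<partial>M)"
    using tail_weighted[OF Mp Ms M0 _ tm _ W1 i1] by auto
  then show "set_integrable lborel {0..} (tail M)" "set_lebesgue_integral lborel {0..} (tail M) = (\<integral>x. x \<partial>M)"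
    by simp_all
  have B: "set_integrable lborel {0..} (\<lambda>t. t * tail M t)"
       "set_lebesgue_integral lborel {0..} (\<lambda>t. t * tail M t) = (\<integral>x. x ^ 2 / 2 \<partial>M)"
    using tail_weighted[OF Mp Ms M0 _ tm _ W2 i2'] by auto
  then show "set_integrable lborel {0..} (\<lambda>t. t * tail M t)" by simp
  show "set_lebesgue_integral lborel {0..} (\<lambda>t. t * tail M t) = (1/2) * (\<integral>x. x ^ 2 \<partial>M)"
    using B(2) by simp
qed



lemma seg_facts:
  fixes z w :: complex
  assumes "w \<in> closed_segment 0 z" "0 \<le> Re z"
  shows "norm w \<le> norm z" "0 \<le> Re w"
proof -
  obtain u where u: "0 \<le> u" "u \<le> 1" "w = u *\<^sub>R z" using assms(1) by (auto simp: in_segment)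
  show "norm w \<le> norm z" using u by (simp add: mult_left_le_one_le)
  show "0 \<le> Re w" using u assms(2) by simp
qed

lemma exp_bound1:
  fixes z :: complex assumes z: "0 \<le> Re z"
  shows "norm (exp (- z) - 1) \<le> norm z"
proof -
  have "norm ((\<lambda>w. exp (- w)) z - (\<lambda>w. exp (- w)) 0) \<le> 1 * norm (z - 0)"
  proof (rule field_differentiable_bound[where S="closed_segment 0 z" and f'="\<lambda>w. - exp (- w)"])
    show "convex (closed_segment 0 z)" by simp
    fix w assume w: "w \<in> closed_segment 0 z"
    show "((\<lambda>w. exp (- w)) has_field_derivative - exp (- w)) (at w within closed_segment 0 z)"
      by (auto intro!: derivative_eq_intros)
    show "norm (- exp (- w)) \<le> 1" using seg_facts[OF w z] by (simp add: norm_exp_eq_Re)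
  qed auto
  then show ?thesis by simp
qed

lemma exp_bound2:
  fixes z :: complex assumes z: "0 \<le> Re z"
  shows "norm (exp (- z) - 1 + z) \<le> norm z ^ 2" "norm (exp (- z) - 1 + z) \<le> 2 * norm z"
proof -
  have "norm ((\<lambda>w. exp (- w) - 1 + w) z - (\<lambda>w. exp (- w) - 1 + w) 0) \<le> norm z * norm (z - 0)"
  proof (rule field_differentiable_bound[where S="closed_segment 0 z" and f'="\<lambda>w. 1 - exp (- w)"])
    show "convex (closed_segment 0 z)" by simp
    fix w assume w: "w \<in> closed_segment 0 z"
    show "((\<lambda>w. exp (- w) - 1 + w) has_field_derivative 1 - exp (- w)) (at w within closed_segment 0 z)"
      by (auto intro!: derivative_eq_intros)
    have "norm (1 - exp (- w)) = norm (exp (- w) - 1)" by (simp add: norm_minus_commute)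
    also have "\<dots> \<le> norm w" using exp_bound1 seg_facts(2)[OF w z] by blast
    also have "\<dots> \<le> norm z" using seg_facts(1)[OF w z] .
    finally show "norm (1 - exp (- w)) \<le> norm z" .
  qed auto
  then show "norm (exp (- z) - 1 + z) \<le> norm z ^ 2" by (simp add: power2_eq_square)
  have "norm (exp (- z) - 1 + z) \<le> norm (exp (- z) - 1) + norm z" by (rule norm_triangle_ineq)
  also have "\<dots> \<le> 2 * norm z" using exp_bound1[OF z] by simp
  finally show "norm (exp (- z) - 1 + z) \<le> 2 * norm z" .
qed



lemma laplace_tail:
  fixes M :: "real measure" and s :: complex
  assumes Mp: "prob_space M" and Ms: "sets M = sets borel" and M0: "measure M {..<0} = 0"
    and i1: "integrable M (\<lambda>x. x)" and i2: "integrable M (\<lambda>x. x ^ 2)" and s: "0 \<le> Re s"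
  shows "set_integrable lborel {0..} (\<lambda>t. exp (- s * of_real t) * of_real (tail M t))"
    and "set_integrable lborel {0..} (\<lambda>t. min ((norm s * t)^2) (2 * (norm s * t)) * tail M t)"
    and "norm (set_lebesgue_integral lborel {0..} (\<lambda>t. exp (- s * of_real t) * of_real (tail M t))
            - (of_real (\<integral>x. x \<partial>M) - s * of_real ((1/2) * (\<integral>x. x ^ 2 \<partial>M))))
         \<le> set_lebesgue_integral lborel {0..} (\<lambda>t. min ((norm s * t)^2) (2 * (norm s * t)) * tail M t)"
proof -
  note tb = tail_basic[OF Mp Ms]
  note tm = tail_moments[OF Mp Ms M0 i1 i2]
  have [measurable]: "tail M \<in> borel_measurable borel" by (rule tb(1))
  have c1: "set_integrable lborel {0..} (\<lambda>t. complex_of_real (tail M t))"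
    using tm(1) unfolding set_integrable_def by (simp add: complex_of_real_integrable_eq[symmetric] scaleR_conv_of_real)
  have c2: "set_integrable lborel {0..} (\<lambda>t. complex_of_real (t * tail M t))"
    using tm(3) unfolding set_integrable_def by (simp add: complex_of_real_integrable_eq[symmetric] scaleR_conv_of_real)
  show A: "set_integrable lborel {0..} (\<lambda>t. exp (- s * of_real t) * of_real (tail M t))"
  proof (rule set_integrable_bound[OF tm(1)])
    show "set_borel_measurable lborel {0..} (\<lambda>t. exp (- s * of_real t) * of_real (tail M t))"
      unfolding set_borel_measurable_def by measurable
    show "AE x in lborel. x \<in> {0..} \<longrightarrow> norm (exp (- s * of_real x) * of_real (tail M x)) \<le> norm (tail M x)"
    proof (intro AE_I2 impI)
      fix x :: real assume x: "x \<in> {0..}"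
      have "exp (- (Re s * x)) \<le> 1" using s x by auto
      then show "norm (exp (- s * of_real x) * of_real (tail M x)) \<le> norm (tail M x)"
        using tb(2)[of x] by (simp add: norm_mult norm_exp_eq_Re mult_left_le_one_le)
    qed
  qed
  show B: "set_integrable lborel {0..} (\<lambda>t. min ((norm s * t)^2) (2 * (norm s * t)) * tail M t)"
  proof (rule set_integrable_bound[OF set_integrable_mult_right[of "2 * norm s", OF tm(3)]])
    show "set_borel_measurable lborel {0..} (\<lambda>t. min ((norm s * t)^2) (2 * (norm s * t)) * tail M t)"
      unfolding set_borel_measurable_def by measurable
    show "AE x in lborel. x \<in> {0..} \<longrightarrow> norm (min ((norm s * x)^2) (2 * (norm s * x)) * tail M x) \<le> norm (2 * norm s * (x * tail M x))"
    proof (intro AE_I2 impI)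
      fix x :: real assume x: "x \<in> {0..}"
      have m0: "0 \<le> min ((norm s * x)^2) (2 * (norm s * x))" using x by simp
      have "min ((norm s * x)^2) (2 * (norm s * x)) * tail M x \<le> (2 * (norm s * x)) * tail M x"
        by (rule mult_right_mono) (simp_all add: tb(2))
      then show "norm (min ((norm s * x)^2) (2 * (norm s * x)) * tail M x) \<le> norm (2 * norm s * (x * tail M x))"
      proof -
        have "norm (min ((norm s * x)^2) (2 * (norm s * x)) * tail M x) = min ((norm s * x)^2) (2 * (norm s * x)) * tail M x"
          using m0 tb(2)[of x] by (simp add: abs_mult)
        also have "\<dots> \<le> (2 * (norm s * x)) * tail M x" by fact
        also have "\<dots> = norm (2 * norm s * (x * tail M x))" using x tb(2)[of x] by (simp add: abs_mult)
        finally show ?thesis .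
      qed
    qed
  qed
  define f where "f t = (exp (- s * of_real t) - 1 + s * of_real t) * of_real (tail M t)" for t
  have fi: "set_integrable lborel {0..} f"
  proof -
    have "set_integrable lborel {0..} (\<lambda>t. exp (- s * of_real t) * of_real (tail M t) - of_real (tail M t) + s * of_real (t * tail M t))"
      using A c1 c2 by (intro set_integral_add set_integral_diff set_integrable_mult_right) auto
    then show ?thesis unfolding f_def by (simp add: algebra_simps)
  qed
  have fe: "set_lebesgue_integral lborel {0..} f = set_lebesgue_integral lborel {0..} (\<lambda>t. exp (- s * of_real t) * of_real (tail M t))
            - (of_real (\<integral>x. x \<partial>M) - s * of_real ((1/2) * (\<integral>x. x ^ 2 \<partial>M)))"
  proof -
    have "set_lebesgue_integral lborel {0..} f = set_lebesgue_integral lborel {0..} (\<lambda>t. exp (- s * of_real t) * of_real (tail M t) - of_real (tail M t) + s * of_real (t * tail M t))"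
      unfolding f_def by (intro set_lebesgue_integral_cong) (auto simp: algebra_simps)
    also have "\<dots> = set_lebesgue_integral lborel {0..} (\<lambda>t. exp (- s * of_real t) * of_real (tail M t)) - set_lebesgue_integral lborel {0..} (\<lambda>t. complex_of_real (tail M t))
        + s * set_lebesgue_integral lborel {0..} (\<lambda>t. complex_of_real (t * tail M t))"
      using A c1 c2 by (simp add: set_integral_add set_integral_diff set_integrable_mult_right)
    also have "\<dots> = set_lebesgue_integral lborel {0..} (\<lambda>t. exp (- s * of_real t) * of_real (tail M t))
            - (of_real (\<integral>x. x \<partial>M) - s * of_real ((1/2) * (\<integral>x. x ^ 2 \<partial>M)))"
      by (simp only: set_integral_complex_of_real tm(2) tm(4)) simp
    finally show ?thesis .
  qed
  have "norm (set_lebesgue_integral lborel {0..} f) \<le> set_lebesgue_integral lborel {0..} (\<lambda>t. norm (f t))"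
    by (rule set_integral_norm_bound[OF fi])
  also have "\<dots> \<le> set_lebesgue_integral lborel {0..} (\<lambda>t. min ((norm s * t)^2) (2 * (norm s * t)) * tail M t)"
  proof (rule set_integral_mono)
    show "set_integrable lborel {0..} (\<lambda>t. norm (f t))"
    proof -
      have "integrable lborel (\<lambda>x. norm (indicator {0..} x *\<^sub>R f x))"
        using fi unfolding set_integrable_def by (rule integrable_norm)
      moreover have "(\<lambda>x. norm (indicator {0..} x *\<^sub>R f x)) = (\<lambda>x. indicator {0..} x *\<^sub>R norm (f x))"
        by (auto simp: indicator_def fun_eq_iff)
      ultimately show ?thesis by (simp add: set_integrable_def)
    qed
    show "set_integrable lborel {0..} (\<lambda>t. min ((norm s * t)^2) (2 * (norm s * t)) * tail M t)" by (rule B)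
    fix t :: real assume t: "t \<in> {0..}"
    have z: "0 \<le> Re (s * of_real t)" using s t by simp
    have "norm (f t) = norm (exp (- (s * of_real t)) - 1 + s * of_real t) * tail M t"
      unfolding f_def using tb(2)[of t] by (simp add: norm_mult)
    also have "\<dots> \<le> min ((norm s * t)^2) (2 * (norm s * t)) * tail M t"
    proof (rule mult_right_mono)
      show "norm (exp (- (s * of_real t)) - 1 + s * of_real t) \<le> min ((norm s * t)^2) (2 * (norm s * t))"
        using exp_bound2[OF z] t by (simp add: norm_mult)
    qed (rule tb(2))
    finally show "norm (f t) \<le> min ((norm s * t)^2) (2 * (norm s * t)) * tail M t" .
  qed
  finally show "norm (set_lebesgue_integral lborel {0..} (\<lambda>t. exp (- s * of_real t) * of_real (tail M t))
            - (of_real (\<integral>x. x \<partial>M) - s * of_real ((1/2) * (\<integral>x. x ^ 2 \<partial>M))))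
         \<le> set_lebesgue_integral lborel {0..} (\<lambda>t. min ((norm s * t)^2) (2 * (norm s * t)) * tail M t)"
    using fe by simp
qed



lemma integral_cexp_interval:
  assumes  "T \<ge> 0" "a \<noteq> 0"
  shows "((\<lambda>t. exp (a * complex_of_real t)) has_integral (exp (a * of_real T) - 1) / a) {0..T}"
proof -
  have "\<And>t. t \<in> {0..T} \<Longrightarrow> ((\<lambda>x. exp (a * x) / a) has_vector_derivative exp (a * t)) (at t within {0..T})"
    using assms
    by (intro derivative_eq_intros has_complex_derivative_imp_has_vector_derivative [unfolded o_def] | simp)+
  then have "((\<lambda>t. exp(a * of_real t)) has_integral exp(a * complex_of_real T)/a - exp(a * of_real 0)/a)  {0..T}"
    by (meson fundamental_theorem_of_calculus \<open>T \<ge> 0\<close>)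
  then show ?thesis
    by (simp add: diff_divide_distrib)
qed

lemma exp_decay_integrable:
  fixes a :: real assumes a: "0 < a"
  shows "integrable lborel (\<lambda>t. indicator {0..} t * exp (- a * t))"
proof (rule integrableI_bounded)
  show "(\<lambda>t. indicator {0..} t * exp (- a * t)) \<in> borel_measurable lborel" by measurable
  have "(\<integral>\<^sup>+t. ennreal (norm (indicator {0..} t * exp (- a * t))) \<partial>lborel) = (\<integral>\<^sup>+t. ennreal (indicator {0..} t * exp (- a * t)) \<partial>lborel)"
    by (intro nn_integral_cong) (simp add: indicator_def)
  also have "\<dots> = ennreal (exp (- a * 0) / a)"
    by (rule nn_integral_has_integral_lebesgue) (use has_integral_exp_minus_to_infinity[OF a, of 0] in auto)
  finally show "(\<integral>\<^sup>+t. ennreal (norm (indicator {0..} t * exp (- a * t))) \<partial>lborel) < \<infinity>" by simp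
qed

lemma laplace_exp:
  fixes z :: complex assumes z: "0 < Re z"
  shows "set_integrable lborel {0..} (\<lambda>t. exp (- z * of_real t))"
    and "set_lebesgue_integral lborel {0..} (\<lambda>t. exp (- z * of_real t)) = 1 / z"
proof -
  define a where "a = Re z"
  have a: "0 < a" using z by (simp add: a_def)
  have w: "integrable lborel (\<lambda>t. indicator {0..} t * exp (- a * t))" by (rule exp_decay_integrable[OF a])
  have nrm: "norm (exp (- z * of_real t)) = exp (- a * t)" for t by (simp add: norm_exp_eq_Re a_def)
  show si: "set_integrable lborel {0..} (\<lambda>t. exp (- z * of_real t))"
  proof (rule set_integrable_bound[where f="\<lambda>t. exp (- a * t)"])
    show "set_integrable lborel {0..} (\<lambda>t. exp (- a * t))" using w by (simp add: set_integrable_def)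
    show "set_borel_measurable lborel {0..} (\<lambda>t. exp (- z * of_real t))"
      unfolding set_borel_measurable_def by measurable
    show "AE x in lborel. x \<in> {0..} \<longrightarrow> norm (exp (- z * of_real x)) \<le> norm (exp (- a * x))"
      by (intro AE_I2) (simp only: nrm, simp)
  qed
  have z0: "z \<noteq> 0" using z by auto
  have J: "set_lebesgue_integral lborel {0..real n} (\<lambda>t. exp (- z * of_real t)) = (exp (- z * of_real (real n)) - 1) / (- z)" for n :: nat
  proof -
    have sin: "set_integrable lborel {0..real n} (\<lambda>t. exp (- z * of_real t))"
      unfolding set_integrable_def by (rule borel_integrable_compact) (auto intro!: continuous_intros)
    have "set_lebesgue_integral lborel {0..real n} (\<lambda>t. exp (- z * of_real t)) = integral {0..real n} (\<lambda>t. exp (- z * of_real t))"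
      by (rule set_borel_integral_eq_integral(2)[OF sin])
    also have "\<dots> = (exp (- z * of_real (real n)) - 1) / (- z)"
      by (rule integral_unique, rule integral_cexp_interval) (use z0 in auto)
    finally show ?thesis .
  qed
  have L1: "(\<lambda>n. set_lebesgue_integral lborel {0..real n} (\<lambda>t. exp (- z * of_real t))) \<longlonglongrightarrow> set_lebesgue_integral lborel {0..} (\<lambda>t. exp (- z * of_real t))"
    unfolding set_lebesgue_integral_def
  proof (rule integral_dominated_convergence[where w="\<lambda>t. indicator {0..} t * exp (- a * t)"])
    show "(\<lambda>x. indicat_real {0..} x *\<^sub>R exp (- z * complex_of_real x)) \<in> borel_measurable lborel" by measurable
    show "\<And>i. (\<lambda>x. indicat_real {0..real i} x *\<^sub>R exp (- z * complex_of_real x)) \<in> borel_measurable lborel" by measurable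
    show "integrable lborel (\<lambda>t. indicator {0..} t * exp (- a * t))" by (rule w)
    show "AE x in lborel. (\<lambda>i. indicat_real {0..real i} x *\<^sub>R exp (- z * complex_of_real x)) \<longlonglongrightarrow> indicat_real {0..} x *\<^sub>R exp (- z * complex_of_real x)"
    proof (intro AE_I2 tendsto_eventually)
      fix x :: real
      obtain N :: nat where "x \<le> real N" using real_arch_simple by blast
      then show "\<forall>\<^sub>F i in sequentially. indicat_real {0..real i} x *\<^sub>R exp (- z * complex_of_real x) = indicat_real {0..} x *\<^sub>R exp (- z * complex_of_real x)"
        unfolding eventually_sequentially by (intro exI[of _ N]) (auto simp: indicator_def)
    qed
    show "\<And>i. AE x in lborel. norm (indicat_real {0..real i} x *\<^sub>R exp (- z * complex_of_real x)) \<le> indicator {0..} x * exp (- a * x)"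
      by (intro AE_I2) (auto simp: indicator_def nrm a_def)
  qed
  have L2: "(\<lambda>n. set_lebesgue_integral lborel {0..real n} (\<lambda>t. exp (- z * of_real t))) \<longlonglongrightarrow> 1 / z"
  proof -
    have "(\<lambda>n. exp (- z * of_real (real n))) \<longlonglongrightarrow> 0"
    proof (rule tendsto_norm_zero_cancel)
      have "(\<lambda>n. exp (- a * real n)) \<longlonglongrightarrow> 0"
        using a by real_asymp
      then show "(\<lambda>n. norm (exp (- z * of_real (real n)))) \<longlonglongrightarrow> 0" by (simp add: nrm a_def)
    qed
    then have "(\<lambda>n. (exp (- z * of_real (real n)) - 1) / (- z)) \<longlonglongrightarrow> (0 - 1) / (- z)"
      by (intro tendsto_intros) (use z0 in auto)
    then show ?thesis unfolding J by simp
  qed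
  show "set_lebesgue_integral lborel {0..} (\<lambda>t. exp (- z * of_real t)) = 1 / z"
    using LIMSEQ_unique[OF L1 L2] .
qed



lemma hk_bounds:
  fixes w :: real assumes w: "0 \<le> w" "w \<le> 1"
  shows "0 \<le> (1 - w) ^ k - 1 + real k * w" "(1 - w) ^ k - 1 + real k * w \<le> real k * w"
    "(1 - w) ^ k - 1 + real k * w \<le> (real k)^2 * w^2"
proof -
  show "0 \<le> (1 - w) ^ k - 1 + real k * w"
    using Bernoulli_inequality[of "- w" k] w by simp
  show "(1 - w) ^ k - 1 + real k * w \<le> real k * w"
    using power_le_one[of "1 - w" k] w by simp
  show "(1 - w) ^ k - 1 + real k * w \<le> (real k)^2 * w^2"
  proof (induction k)
    case 0 then show ?case by simp
  next
    case (Suc k)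
    have h0: "0 \<le> (1 - w) ^ k - 1 + real k * w" using Bernoulli_inequality[of "- w" k] w by simp
    have eq: "(1 - w) ^ Suc k - 1 + real (Suc k) * w = (1 - w) * ((1 - w) ^ k - 1 + real k * w) + real k * w^2"
      by (simp add: algebra_simps power2_eq_square)
    have "(1 - w) * ((1 - w) ^ k - 1 + real k * w) \<le> (1 - w) ^ k - 1 + real k * w"
      using h0 w by (simp add: mult_left_le_one_le)
    then have "(1 - w) ^ Suc k - 1 + real (Suc k) * w \<le> (real k)^2 * w^2 + real k * w^2"
      using Suc eq by linarith
    also have "\<dots> \<le> (real (Suc k))^2 * w^2"
      using w by (simp add: power2_eq_square algebra_simps)
    finally show ?case .
  qed
qed


lemma phi_ineq:
  fixes p :: "nat \<Rightarrow> real" and g z :: real and n kk :: nat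
  assumes pl: "prob_law_Zplus p" and sm: "summable (\<lambda>k. real k * p k)"
    and g: "0 < g" and n: "1 \<le> n" and z: "0 \<le> z" "z \<le> real n"
  shows "0 \<le> phi_n n g p z - g * z * (1 - mean_Z p)"
    and "phi_n n g p z - g * z * (1 - mean_Z p) \<le> (g / real n) * (real kk)^2 * z^2 + z * (g * (\<Sum>k. if kk \<le> k then real k * p k else 0))"
proof -
  have p0: "\<And>k. 0 \<le> p k" and ps: "p sums 1" using pl unfolding prob_law_Zplus_def by auto
  define w where "w = z / real n"
  have npos: "0 < real n" using n by simp
  have w: "0 \<le> w" "w \<le> 1" using z npos by (auto simp: w_def field_simps)
  define x where "x = 1 - w"
  have x: "0 \<le> x" "x \<le> 1" using w by (auto simp: x_def)
  have sp: "summable p" using ps by (rule sums_summable)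
  have sG: "summable (\<lambda>k. p k * x ^ k)"
  proof (rule summable_comparison_test[OF _ sp])
    show "\<exists>N. \<forall>k\<ge>N. norm (p k * x ^ k) \<le> p k"
    proof (intro exI[of _ 0] allI impI)
      fix k :: nat
      have "x ^ k \<le> 1" using x by (rule power_le_one)
      then have "p k * x ^ k \<le> p k" using p0[of k] by (rule mult_left_le)
      then show "norm (p k * x ^ k) \<le> p k" using p0[of k] x by (simp add: abs_mult)
    qed
  qed
  define G where "G = (\<Sum>k. p k * x ^ k)"
  have G: "(\<lambda>k. p k * x ^ k) sums G" using sG by (simp add: G_def summable_sums)
  define m where "m = mean_Z p"
  have m: "(\<lambda>k. real k * p k) sums m" using sm by (simp add: m_def mean_Z_def summable_sums)
  define H where "H k = p k * ((1 - w) ^ k - 1 + real k * w)" for k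
  have Hs: "H sums (G - 1 + w * m)"
  proof -
    have "(\<lambda>k. p k * x ^ k - p k + w * (real k * p k)) sums (G - 1 + w * m)"
      by (intro sums_add sums_diff sums_mult G ps m)
    moreover have "(\<lambda>k. p k * x ^ k - p k + w * (real k * p k)) = H"
      by (auto simp: H_def x_def fun_eq_iff algebra_simps)
    ultimately show ?thesis by simp
  qed
  have phiq: "phi_n n g p z - g * z * (1 - mean_Z p) = real n * g * (G - 1 + w * m)"
  proof -
    have zw: "z = real n * w" using npos by (simp add: w_def)
    have "genfun p (1 - z / real n) = G" by (simp add: genfun_def G_def x_def w_def)
    then show ?thesis unfolding phi_n_def m_def[symmetric] using zw by (simp add: w_def[symmetric] algebra_simps)
  qed
  have H0: "0 \<le> H k" for k using hk_bounds(1)[OF w] p0 by (simp add: H_def)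
  show "0 \<le> phi_n n g p z - g * z * (1 - mean_Z p)"
    unfolding phiq using sums_le[OF _ sums_zero Hs] H0 g npos by simp
  define S where "S = (\<Sum>k. if kk \<le> k then real k * p k else 0)"
  have sS: "summable (\<lambda>k. if kk \<le> k then real k * p k else 0)"
    by (rule summable_comparison_test[OF _ sm]) (auto simp: p0)
  have Bs: "(\<lambda>k. w * (if kk \<le> k then real k * p k else 0) + (real kk)^2 * w^2 * p k) sums (w * S + (real kk)^2 * w^2 * 1)"
    by (intro sums_add sums_mult ps) (simp add: S_def summable_sums sS)
  have HB: "H k \<le> w * (if kk \<le> k then real k * p k else 0) + (real kk)^2 * w^2 * p k" for k
  proof (cases "kk \<le> k")
    case True
    have "H k \<le> p k * (real k * w)" unfolding H_def using hk_bounds(2)[OF w] by (rule mult_left_mono) (simp add: p0)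
    moreover have "0 \<le> (real kk)^2 * w^2 * p k" using p0 by simp
    ultimately show ?thesis using True by (simp add: algebra_simps)
  next
    case False
    have "H k \<le> p k * ((real k)^2 * w^2)" unfolding H_def using hk_bounds(3)[OF w] by (rule mult_left_mono) (simp add: p0)
    also have "\<dots> \<le> p k * ((real kk)^2 * w^2)"
      using False p0 by (intro mult_left_mono mult_right_mono power_mono) auto
    finally show ?thesis using False by (simp add: algebra_simps)
  qed
  have "G - 1 + w * m \<le> w * S + (real kk)^2 * w^2 * 1" by (rule sums_le[OF HB Hs Bs])
  then have "real n * g * (G - 1 + w * m) \<le> real n * g * (w * S + (real kk)^2 * w^2)"
    using g npos by (intro mult_left_mono) auto
  also have "\<dots> = (g / real n) * (real kk)^2 * z^2 + z * (g * S)"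
    using npos by (simp add: w_def power2_eq_square field_simps)
  finally show "phi_n n g p z - g * z * (1 - mean_Z p) \<le> (g / real n) * (real kk)^2 * z^2 + z * (g * (\<Sum>k. if kk \<le> k then real k * p k else 0))"
    unfolding phiq S_def .
qed


lemma m_conv:
  fixes p :: "nat \<Rightarrow> nat \<Rightarrow> real" and gam :: "nat \<Rightarrow> real" and gstar :: real and phi :: "real \<Rightarrow> real"
  assumes p_law: "\<forall>n\<ge>1. prob_law_Zplus (p n) \<and> summable (\<lambda>k. real k * p n k)"
    and gam_pos: "\<forall>n\<ge>1. gam n > 0"
    and gam_lin: "(\<lambda>n. gam n / real n) \<longlonglongrightarrow> gstar"
    and phi_lim: "\<forall>T. uniform_limit {0..T} (\<lambda>n. phi_n n (gam n) (p n)) phi sequentially"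
    and tailc: "(\<lambda>k1. limsup (\<lambda>n. ereal (gam n * (\<Sum>k. if k1 \<le> k then real k * p n k else 0)))) \<longlonglongrightarrow> 0"
  shows "convergent (\<lambda>n. gam n * (1 - mean_Z (p n)))"
proof -
  define Q where "Q n = gam n * (1 - mean_Z (p n))" for n
  have "Cauchy Q"
  proof (rule CauchyI)
    fix e :: real assume e: "0 < e"
    define \<epsilon> where "\<epsilon> = e / 7"
    have ep: "0 < \<epsilon>" using e by (simp add: \<epsilon>_def)
    have "eventually (\<lambda>k1. limsup (\<lambda>n. ereal (gam n * (\<Sum>k. if k1 \<le> k then real k * p n k else 0))) < ereal \<epsilon>) sequentially"
      using order_tendstoD(2)[OF tailc, of "ereal \<epsilon>"] ep by simp
    then obtain k1 where k1: "limsup (\<lambda>n. ereal (gam n * (\<Sum>k. if k1 \<le> k then real k * p n k else 0))) < ereal \<epsilon>"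
      by (auto simp: eventually_sequentially)
    have ev1: "eventually (\<lambda>n. gam n * (\<Sum>k. if k1 \<le> k then real k * p n k else 0) < \<epsilon>) sequentially"
      using Limsup_lessD[OF k1] by simp
    have ev2: "eventually (\<lambda>n. gam n / real n < gstar + 1) sequentially"
      using order_tendstoD(2)[OF gam_lin, of "gstar + 1"] by simp
    define z where "z = \<epsilon> / ((\<bar>gstar\<bar> + 1) * (real k1)^2 + 1)"
    have zd0: "0 \<le> (\<bar>gstar\<bar> + 1) * (real k1)^2" by simp
    then have zd: "0 < (\<bar>gstar\<bar> + 1) * (real k1)^2 + 1" by linarith
    have zp: "0 < z" unfolding z_def using ep zd by (rule divide_pos_pos)
    have zb: "(\<bar>gstar\<bar> + 1) * (real k1)^2 * z \<le> \<epsilon>"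
    proof -
      have d: "0 < (\<bar>gstar\<bar> + 1) * (real k1)^2 + 1" by (rule zd)
      have "(\<bar>gstar\<bar> + 1) * (real k1)^2 * z = \<epsilon> * ((\<bar>gstar\<bar> + 1) * (real k1)^2 / ((\<bar>gstar\<bar> + 1) * (real k1)^2 + 1))"
        by (simp add: z_def)
      also have "\<dots> \<le> \<epsilon> * 1" using ep d by (intro mult_left_mono) (auto simp: divide_le_eq)
      finally show ?thesis by simp
    qed
    have phz: "(\<lambda>n. phi_n n (gam n) (p n) z) \<longlonglongrightarrow> phi z"
      using tendsto_uniform_limitI[OF phi_lim[rule_format, of z]] zp by simp
    have ev3: "eventually (\<lambda>n. \<bar>phi_n n (gam n) (p n) z - phi z\<bar> < \<epsilon> * z) sequentially"
      using phz ep zp unfolding tendsto_iff dist_real_def by (auto simp: mult_pos_pos)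
    have ev4: "eventually (\<lambda>n. 1 \<le> n \<and> z \<le> real n) sequentially"
    proof -
      obtain N :: nat where "z \<le> real N" using real_arch_simple by blast
      then show ?thesis unfolding eventually_sequentially by (intro exI[of _ "N + 1"]) auto
    qed
    have evD: "eventually (\<lambda>n. \<bar>Q n - phi z / z\<bar> < 3 * \<epsilon>) sequentially"
      using ev1 ev2 ev3 ev4
    proof eventually_elim
      fix n assume A: "gam n * (\<Sum>k. if k1 \<le> k then real k * p n k else 0) < \<epsilon>" "gam n / real n < gstar + 1"
        "\<bar>phi_n n (gam n) (p n) z - phi z\<bar> < \<epsilon> * z" "1 \<le> n \<and> z \<le> real n"
      have pl: "prob_law_Zplus (p n)" "summable (\<lambda>k. real k * p n k)" using p_law A(4) by auto
      have g: "0 < gam n" using gam_pos A(4) by auto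
      have I1: "0 \<le> phi_n n (gam n) (p n) z - gam n * z * (1 - mean_Z (p n))"
        using phi_ineq(1)[where n=n, OF pl g _ less_imp_le[OF zp]] A(4) by auto
      have I2: "phi_n n (gam n) (p n) z - gam n * z * (1 - mean_Z (p n)) \<le> (gam n / real n) * (real k1)^2 * z^2 + z * (gam n * (\<Sum>k. if k1 \<le> k then real k * p n k else 0))"
        using phi_ineq(2)[where n=n and kk=k1, OF pl g _ less_imp_le[OF zp]] A(4) by auto
      have "(gam n / real n) * (real k1)^2 * z^2 \<le> ((\<bar>gstar\<bar> + 1) * (real k1)^2 * z) * z"
      proof -
        have "gam n / real n \<le> \<bar>gstar\<bar> + 1" using A(2) by linarith
        then have "(gam n / real n) * ((real k1)^2 * z^2) \<le> (\<bar>gstar\<bar> + 1) * ((real k1)^2 * z^2)"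
          by (rule mult_right_mono) simp
        then show ?thesis by (simp add: power2_eq_square mult_ac)
      qed
      also have "\<dots> \<le> \<epsilon> * z" using zb zp by (intro mult_right_mono) auto
      finally have B1: "(gam n / real n) * (real k1)^2 * z^2 \<le> \<epsilon> * z" .
      have B2: "z * (gam n * (\<Sum>k. if k1 \<le> k then real k * p n k else 0)) \<le> z * \<epsilon>"
        using A(1) zp by (intro mult_left_mono) auto
      have D: "\<bar>phi_n n (gam n) (p n) z - z * Q n\<bar> \<le> 2 * \<epsilon> * z"
        using I1 I2 B1 B2 unfolding Q_def by (simp add: algebra_simps)
      have "\<bar>z * Q n - phi z\<bar> < 3 * \<epsilon> * z" using D A(3) by linarith
      moreover have "z * Q n - phi z = z * (Q n - phi z / z)" using zp by (simp add: field_simps)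
      ultimately have "z * \<bar>Q n - phi z / z\<bar> < z * (3 * \<epsilon>)"
        using zp by (simp add: abs_mult mult_ac)
      then show "\<bar>Q n - phi z / z\<bar> < 3 * \<epsilon>" using zp by (simp add: mult_less_cancel_left_pos)
    qed
    then obtain M where M: "\<And>n. M \<le> n \<Longrightarrow> \<bar>Q n - phi z / z\<bar> < 3 * \<epsilon>"
      by (auto simp: eventually_sequentially)
    show "\<exists>M. \<forall>m\<ge>M. \<forall>n\<ge>M. norm (Q m - Q n) < e"
    proof (intro exI[of _ M] allI impI)
      fix m n assume "M \<le> m" "M \<le> n"
      then have "\<bar>Q m - phi z / z\<bar> < 3 * \<epsilon>" "\<bar>Q n - phi z / z\<bar> < 3 * \<epsilon>" using M by auto
      then show "norm (Q m - Q n) < e" unfolding \<epsilon>_def real_norm_def by linarith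
    qed
  qed
  then show ?thesis unfolding Q_def[abs_def] by (rule Cauchy_convergent)
qed



lemma trunc_measurable:
  fixes R :: "real \<Rightarrow> real"
  assumes loc: "\<And>T. set_integrable lborel {0..T} R"
  shows "(\<lambda>t. if 0 \<le> t then R t else 0) \<in> borel_measurable borel"
proof (rule borel_measurable_LIMSEQ_real[where u="\<lambda>i t. indicator {0..real i} t * R t"])
  fix i :: nat
  have "(\<lambda>t. indicator {0..real i} t *\<^sub>R R t) \<in> borel_measurable lborel"
    using loc[of "real i"] unfolding set_integrable_def by (rule borel_measurable_integrable)
  then show "(\<lambda>t. indicator {0..real i} t * R t) \<in> borel_measurable borel" by simp
next
  fix t :: real
  obtain N :: nat where "t \<le> real N" using real_arch_simple by blast
  then show "(\<lambda>i. indicator {0..real i} t * R t) \<longlonglongrightarrow> (if 0 \<le> t then R t else 0)"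
    by (intro tendsto_eventually) (auto simp: eventually_sequentially indicator_def intro!: exI[of _ N])
qed

lemma abs_set_integral_ennreal:
  fixes h :: "real \<Rightarrow> real"
  shows "ennreal \<bar>set_lebesgue_integral lborel A h\<bar> \<le> (\<integral>\<^sup>+v. indicator A v * ennreal \<bar>h v\<bar> \<partial>lborel)"
proof (cases "set_integrable lborel A h")
  case True
  have "ennreal \<bar>set_lebesgue_integral lborel A h\<bar> = ennreal (norm (\<integral>v. indicator A v *\<^sub>R h v \<partial>lborel))"
    by (simp add: set_lebesgue_integral_def)
  also have "\<dots> \<le> (\<integral>\<^sup>+v. ennreal (norm (indicator A v *\<^sub>R h v)) \<partial>lborel)"
    using True unfolding set_integrable_def by (rule integral_norm_bound_ennreal)
  also have "\<dots> = (\<integral>\<^sup>+v. indicator A v * ennreal \<bar>h v\<bar> \<partial>lborel)"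
    by (intro nn_integral_cong) (simp add: indicator_def)
  finally show ?thesis .
next
  case False
  then show ?thesis by (simp add: set_lebesgue_integral_def set_integrable_def not_integrable_integral_eq)
qed


lemma renewal_laplace:
  fixes M :: "real measure" and lam mu :: real and R :: "real \<Rightarrow> real" and s :: complex
    and k :: nat and y :: "nat \<Rightarrow> real"
  assumes Mp: "prob_space M" and Ms: "sets M = sets borel" and M0: "measure M {..<0} = 0"
    and i1: "integrable M (\<lambda>x. x)" and i2: "integrable M (\<lambda>x. x ^ 2)"
    and lam: "0 < lam" and mu: "0 \<le> mu" and s: "0 \<le> Re s"
    and loc: "\<And>T. set_integrable lborel {0..T} R"
    and Req: "\<And>t. 0 \<le> t \<Longrightarrow> R t = lam * mu * tail M t + lam * mu * set_lebesgue_integral lborel {0..t} (\<lambda>v. R (t - v) * tail M v)"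
    and K1: "lam * mu * set_lebesgue_integral lborel {0..} (\<lambda>t. exp (- Re s * t) * tail M t) < 1"
  shows "set_integrable lborel {0..} (\<lambda>\<tau>. exp (- s * of_real \<tau>) * of_real (Rky lam R k y \<tau>))"
    and "(1 - of_real (lam * mu) * set_lebesgue_integral lborel {0..} (\<lambda>t. exp (- s * of_real t) * of_real (tail M t)))
          * set_lebesgue_integral lborel {0..} (\<lambda>\<tau>. exp (- s * of_real \<tau>) * of_real (Rky lam R k y \<tau>))
         = of_real lam * (\<Sum>j=1..k. set_lebesgue_integral lborel {0..} (\<lambda>t. exp (- s * of_real t) * of_real (if y j > t then 1 else 0)))"
proof -
  define T where "T = tail M"
  define a where "a = Re s"
  define Rp where "Rp t = (if 0 \<le> t then R t else 0)" for t
  define f where "f t = lam * mu * T t" for t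
  define g where "g j t = (if y j > t then 1 else (0::real))" for j t
  note tb = tail_basic[OF Mp Ms]
  note tmo = tail_moments[OF Mp Ms M0 i1 i2]
  note lt = laplace_tail[OF Mp Ms M0 i1 i2 s]
  have a0: "0 \<le> a" using s by (simp add: a_def)
  have Tm[measurable]: "T \<in> borel_measurable borel" using tb(1) by (simp add: T_def)
  have T0: "0 \<le> T t" "T t \<le> 1" for t using tb(2,3) by (auto simp: T_def)
  have Rpm[measurable]: "Rp \<in> borel_measurable borel" using trunc_measurable[OF loc] by (simp add: Rp_def[abs_def])
  have gm[measurable]: "g j \<in> borel_measurable borel" for j unfolding g_def by measurable
  have fm[measurable]: "f \<in> borel_measurable borel" unfolding f_def[abs_def] by measurable
  have f0: "0 \<le> f t" for t using lam mu T0 by (simp add: f_def)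
  have locp: "set_integrable lborel {0..T'} Rp" for T'
    using loc[of T'] by (rule set_integrable_cong[THEN iffD1, rotated -1]) (auto simp: Rp_def)
  have convp: "set_lebesgue_integral lborel {0..t} (\<lambda>v. R (t - v) * h v) = set_lebesgue_integral lborel {0..t} (\<lambda>v. Rp (t - v) * h v)" for t and h :: "real \<Rightarrow> real"
    by (rule set_lebesgue_integral_cong) (auto simp: Rp_def)
  have eiT: "set_integrable lborel {0..} (\<lambda>t. exp (- a * t) * T t)"
  proof (rule set_integrable_bound[OF tmo(1)])
    show "set_borel_measurable lborel {0..} (\<lambda>t. exp (- a * t) * T t)"
      unfolding set_borel_measurable_def by measurable
    show "AE x in lborel. x \<in> {0..} \<longrightarrow> norm (exp (- a * x) * T x) \<le> norm (tail M x)"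
    proof (intro AE_I2 impI)
      fix x :: real assume "x \<in> {0..}"
      then have "exp (- a * x) \<le> 1" using a0 by auto
      then show "norm (exp (- a * x) * T x) \<le> norm (tail M x)"
        using T0[of x] by (simp add: T_def abs_mult mult_left_le_one_le)
    qed
  qed
  define K where "K = lam * mu * set_lebesgue_integral lborel {0..} (\<lambda>t. exp (- a * t) * T t)"
  have K1': "K < 1" using K1 by (simp add: K_def a_def T_def)
  have Keq: "(\<integral>\<^sup>+v. indicator {0..} v * ennreal (exp (- a * v) * f v) \<partial>lborel) = ennreal K"
  proof -
    have i: "integrable lborel (\<lambda>v. lam * mu * (indicator {0..} v * (exp (- a * v) * T v)))"
      using eiT unfolding set_integrable_def by (intro integrable_mult_right) simp
    have "(\<integral>\<^sup>+v. indicator {0..} v * ennreal (exp (- a * v) * f v) \<partial>lborel)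
        = (\<integral>\<^sup>+v. ennreal (lam * mu * (indicator {0..} v * (exp (- a * v) * T v))) \<partial>lborel)"
      by (intro nn_integral_cong) (simp add: indicator_def f_def mult_ac)
    also have "\<dots> = ennreal (\<integral>v. lam * mu * (indicator {0..} v * (exp (- a * v) * T v)) \<partial>lborel)"
      by (rule nn_integral_eq_integral[OF i]) (use lam mu T0 in simp)
    also have "\<dots> = ennreal K"
      by (simp add: K_def set_lebesgue_integral_def mult_ac)
    finally show ?thesis .
  qed
  have K0: "0 \<le> K"
  proof -
    have "0 \<le> (\<integral>v. indicator {0..} v * (lam * mu * (exp (- a * v) * T v)) \<partial>lborel)"
      using lam mu T0 by (intro integral_nonneg_AE) auto
    then show ?thesis by (simp add: K_def set_lebesgue_integral_def mult_ac)
  qed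
  have eqh: "ennreal \<bar>Rp t\<bar> \<le> ennreal (f t)
              + (\<integral>\<^sup>+v. indicator {0..} v * indicator {v..} t * ennreal \<bar>Rp (t - v)\<bar> * ennreal (f v) \<partial>lborel)"
    if t: "0 \<le> t" for t
  proof -
    define X where "X = set_lebesgue_integral lborel {0..t} (\<lambda>v. Rp (t - v) * T v)"
    have "Rp t = f t + lam * mu * X"
      using Req[OF t] t by (simp add: Rp_def X_def f_def T_def convp)
    then have "\<bar>Rp t\<bar> \<le> \<bar>f t\<bar> + \<bar>lam * mu * X\<bar>" by (simp add: abs_triangle_ineq)
    also have "\<dots> = f t + lam * mu * \<bar>X\<bar>" using f0[of t] lam mu by (simp add: abs_mult)
    finally have "\<bar>Rp t\<bar> \<le> f t + lam * mu * \<bar>X\<bar>" .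
    then have "ennreal \<bar>Rp t\<bar> \<le> ennreal (f t) + ennreal (lam * mu) * ennreal \<bar>X\<bar>"
      using f0[of t] lam mu by (simp add: ennreal_plus[symmetric] ennreal_mult[symmetric] ennreal_leI del: ennreal_plus)
    also have "ennreal \<bar>X\<bar> \<le> (\<integral>\<^sup>+v. indicator {0..t} v * ennreal \<bar>Rp (t - v) * T v\<bar> \<partial>lborel)"
      unfolding X_def by (rule abs_set_integral_ennreal)
    also have "ennreal (lam * mu) * (\<integral>\<^sup>+v. indicator {0..t} v * ennreal \<bar>Rp (t - v) * T v\<bar> \<partial>lborel)
        = (\<integral>\<^sup>+v. ennreal (lam * mu) * (indicator {0..t} v * ennreal \<bar>Rp (t - v) * T v\<bar>) \<partial>lborel)"
      by (rule nn_integral_cmult[symmetric]) measurable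
    also have "\<dots> = (\<integral>\<^sup>+v. indicator {0..} v * indicator {v..} t * ennreal \<bar>Rp (t - v)\<bar> * ennreal (f v) \<partial>lborel)"
    proof (intro nn_integral_cong)
      fix v :: real
      have lm: "0 \<le> lam * mu" using lam mu by simp
      have e1: "ennreal (lam * mu) * ennreal \<bar>Rp (t - v) * T v\<bar> = ennreal (lam * mu * \<bar>Rp (t - v) * T v\<bar>)"
        using lm by (simp add: ennreal_mult)
      have e2: "ennreal \<bar>Rp (t - v)\<bar> * ennreal (f v) = ennreal (\<bar>Rp (t - v)\<bar> * f v)"
        using f0[of v] by (simp add: ennreal_mult)
      have e3: "lam * mu * \<bar>Rp (t - v) * T v\<bar> = \<bar>Rp (t - v)\<bar> * f v"
        using T0[of v] by (simp add: f_def abs_mult)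
      show "ennreal (lam * mu) * (indicator {0..t} v * ennreal \<bar>Rp (t - v) * T v\<bar>) = indicator {0..} v * indicator {v..} t * ennreal \<bar>Rp (t - v)\<bar> * ennreal (f v)"
        by (cases "0 \<le> v \<and> v \<le> t") (auto simp: indicator_def e1 e2 e3 mult.assoc[symmetric] simp del: ennreal_mult')
    qed
    finally show ?thesis by (simp add: add_left_mono mult_left_mono)
  qed
  have RB: "(\<integral>\<^sup>+t. indicator {0..} t * ennreal (exp (- a * t) * \<bar>Rp t\<bar>) \<partial>lborel) \<le> ennreal (K / (1 - K))"
    by (rule renewal_bound[OF Rpm fm f0 a0 K0 K1' locp eqh Keq[THEN eq_refl]])
  have iR: "integrable lborel (\<lambda>t. indicator {0..} t * (exp (- Re s * t) * \<bar>Rp t\<bar>))"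
  proof (rule integrableI_bounded)
    show "(\<lambda>t. indicator {0..} t * (exp (- Re s * t) * \<bar>Rp t\<bar>)) \<in> borel_measurable lborel" by measurable
    have "(\<integral>\<^sup>+t. ennreal (norm (indicator {0..} t * (exp (- Re s * t) * \<bar>Rp t\<bar>))) \<partial>lborel)
        = (\<integral>\<^sup>+t. indicator {0..} t * ennreal (exp (- a * t) * \<bar>Rp t\<bar>) \<partial>lborel)"
      by (intro nn_integral_cong) (simp add: indicator_def a_def abs_mult)
    also have "\<dots> < \<infinity>" using RB by (simp add: le_less_trans)
    finally show "(\<integral>\<^sup>+t. ennreal (norm (indicator {0..} t * (exp (- Re s * t) * \<bar>Rp t\<bar>))) \<partial>lborel) < \<infinity>" .
  qed
  have iT: "integrable lborel (\<lambda>t. indicator {0..} t * (exp (- Re s * t) * \<bar>T t\<bar>))"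
    using eiT unfolding set_integrable_def by (simp add: a_def T0 abs_of_nonneg)
  have ig: "integrable lborel (\<lambda>t. indicator {0..} t * (exp (- Re s * t) * \<bar>g j t\<bar>))" for j
  proof (rule Bochner_Integration.integrable_bound)
    show "integrable lborel (\<lambda>t. indicator {0..\<bar>y j\<bar>} t *\<^sub>R (1::real))"
      by (rule borel_integrable_compact) auto
    show "(\<lambda>t. indicator {0..} t * (exp (- Re s * t) * \<bar>g j t\<bar>)) \<in> borel_measurable lborel" by measurable
    show "AE x in lborel. norm (indicator {0..} x * (exp (- Re s * x) * \<bar>g j x\<bar>)) \<le> norm (indicator {0..\<bar>y j\<bar>} x *\<^sub>R (1::real))"
    proof (intro AE_I2)
      fix x :: real
      show "norm (indicator {0..} x * (exp (- Re s * x) * \<bar>g j x\<bar>)) \<le> norm (indicator {0..\<bar>y j\<bar>} x *\<^sub>R (1::real))"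
      proof (cases "0 \<le> x \<and> x < y j")
        case True
        then have "exp (- Re s * x) \<le> 1" using s by auto
        then show ?thesis using True by (simp add: indicator_def g_def)
      qed (auto simp: indicator_def g_def)
    qed
  qed
  note CT = laplace_conv[OF Rpm Tm iR iT]
  note CG = laplace_conv[OF Rpm gm iR ig]
  define LT where "LT = set_lebesgue_integral lborel {0..} (\<lambda>t. exp (- s * of_real t) * of_real (T t))"
  define LR where "LR = set_lebesgue_integral lborel {0..} (\<lambda>t. exp (- s * of_real t) * of_real (Rp t))"
  define Y where "Y j = set_lebesgue_integral lborel {0..} (\<lambda>t. exp (- s * of_real t) * of_real (g j t))" for j
  have LTi: "set_integrable lborel {0..} (\<lambda>t. exp (- s * of_real t) * of_real (T t))"
    using lt(1) by (simp add: T_def)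
  have nrm: "norm (exp (- s * of_real t) * of_real (h t)) = norm (indicator {0..} t * (exp (- Re s * t) * \<bar>h t\<bar>))" if "0 \<le> t" for t and h :: "real \<Rightarrow> real"
    using that by (simp add: norm_mult norm_exp_eq_Re abs_mult)
  have gen_int: "set_integrable lborel {0..} (\<lambda>t. exp (- s * of_real t) * of_real (h t))"
    if hm: "h \<in> borel_measurable borel" and hi: "integrable lborel (\<lambda>t. indicator {0..} t * (exp (- Re s * t) * \<bar>h t\<bar>))" for h :: "real \<Rightarrow> real"
  proof (rule set_integrable_bound[where f="\<lambda>t. indicator {0..} t * (exp (- Re s * t) * \<bar>h t\<bar>)"])
    show "set_integrable lborel {0..} (\<lambda>t. indicator {0..} t * (exp (- Re s * t) * \<bar>h t\<bar>))"
    proof -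
      have "(\<lambda>x. indicat_real {0..} x *\<^sub>R (indicat_real {0..} x * (exp (- Re s * x) * \<bar>h x\<bar>))) = (\<lambda>t. indicator {0..} t * (exp (- Re s * t) * \<bar>h t\<bar>))"
        by (auto simp: fun_eq_iff indicator_def)
      then show ?thesis using hi unfolding set_integrable_def by simp
    qed
    show "set_borel_measurable lborel {0..} (\<lambda>t. exp (- s * of_real t) * of_real (h t))"
      unfolding set_borel_measurable_def using hm by measurable
    show "AE x in lborel. x \<in> {0..} \<longrightarrow> norm (exp (- s * of_real x) * of_real (h x)) \<le> norm (indicator {0..} x * (exp (- Re s * x) * \<bar>h x\<bar>))"
      using nrm by auto
  qed
  have LRi: "set_integrable lborel {0..} (\<lambda>t. exp (- s * of_real t) * of_real (Rp t))" by (rule gen_int[OF Rpm iR])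
  have Yi: "set_integrable lborel {0..} (\<lambda>t. exp (- s * of_real t) * of_real (g j t))" for j by (rule gen_int[OF gm ig])
  have LReq: "LR = of_real (lam * mu) * LT + of_real (lam * mu) * (LR * LT)"
  proof -
    have "LR = set_lebesgue_integral lborel {0..} (\<lambda>t. of_real (lam * mu) * (exp (- s * of_real t) * of_real (T t))
               + of_real (lam * mu) * (exp (- s * of_real t) * of_real (set_lebesgue_integral lborel {0..t} (\<lambda>v. Rp (t - v) * T v))))"
      unfolding LR_def
    proof (rule set_lebesgue_integral_cong)
      show "\<forall>t. t \<in> {0..} \<longrightarrow> exp (- s * of_real t) * of_real (Rp t) = of_real (lam * mu) * (exp (- s * of_real t) * of_real (T t))
               + of_real (lam * mu) * (exp (- s * of_real t) * of_real (set_lebesgue_integral lborel {0..t} (\<lambda>v. Rp (t - v) * T v)))"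
      proof (intro allI impI)
        fix t :: real assume t: "t \<in> {0..}"
        have "Rp t = lam * mu * T t + lam * mu * set_lebesgue_integral lborel {0..t} (\<lambda>v. Rp (t - v) * T v)"
          using Req[of t] t by (simp add: Rp_def T_def convp)
        then show "exp (- s * of_real t) * of_real (Rp t) = of_real (lam * mu) * (exp (- s * of_real t) * of_real (T t))
               + of_real (lam * mu) * (exp (- s * of_real t) * of_real (set_lebesgue_integral lborel {0..t} (\<lambda>v. Rp (t - v) * T v)))"
          by (simp add: algebra_simps)
      qed
    qed simp
    also have "\<dots> = of_real (lam * mu) * LT + of_real (lam * mu) * (LR * LT)"
      using LTi CT(1) by (simp add: set_integral_add set_integrable_mult_right CT(2)[simplified] LT_def LR_def)
    finally show ?thesis .
  qed
  have key: "(1 + LR) * (1 - of_real (lam * mu) * LT) = 1"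
    using LReq by (simp add: algebra_simps)
  define P where "P j t = of_real lam * (exp (- s * of_real t) * of_real (g j t))
          + of_real lam * (exp (- s * of_real t) * of_real (set_lebesgue_integral lborel {0..t} (\<lambda>v. Rp (t - v) * g j v)))" for j t
  have Pi: "set_integrable lborel {0..} (P j)" for j
    unfolding P_def using Yi[of j] CG(1)[of j] by (intro set_integral_add set_integrable_mult_right) auto
  have PI: "set_lebesgue_integral lborel {0..} (P j) = of_real lam * Y j + of_real lam * (LR * Y j)" for j
    unfolding P_def using Yi[of j] CG(1)[of j] by (simp add: set_integral_add set_integrable_mult_right CG(2)[simplified] Y_def LR_def)
  have Rky_eq: "exp (- s * of_real t) * of_real (Rky lam R k y t) = (\<Sum>j=1..k. P j t)" if t: "0 \<le> t" for t
  proof -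
    have "Rky lam R k y t = (\<Sum>j=1..k. lam * g j t + lam * set_lebesgue_integral lborel {0..t} (\<lambda>v. Rp (t - v) * g j v))"
      unfolding Rky_def g_def by (simp add: convp)
    then show ?thesis by (simp add: P_def sum_distrib_left algebra_simps)
  qed
  have Rky_eq': "(\<Sum>j=1..k. P j t) = exp (- (s * of_real t)) * of_real (Rky lam R k y t)" if t: "0 \<le> t" for t
    using Rky_eq[OF t] by (metis mult_minus_left)
  have Rky_eq'': "(\<Sum>j=Suc 0..k. P j t) = exp (- (s * of_real t)) * of_real (Rky lam R k y t)" if t: "0 \<le> t" for t
    using Rky_eq'[OF t] by simp
  have SI: "set_integrable lborel {0..} (\<lambda>t. \<Sum>j=1..k. P j t)"
    unfolding set_integrable_def scaleR_sum_right
    by (rule Bochner_Integration.integrable_sum) (use Pi in \<open>simp add: set_integrable_def\<close>)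
  show "set_integrable lborel {0..} (\<lambda>\<tau>. exp (- s * of_real \<tau>) * of_real (Rky lam R k y \<tau>))"
    using SI by (rule set_integrable_cong[THEN iffD1, rotated -1]) (auto simp: Rky_eq'')
  have "set_lebesgue_integral lborel {0..} (\<lambda>\<tau>. exp (- s * of_real \<tau>) * of_real (Rky lam R k y \<tau>))
      = set_lebesgue_integral lborel {0..} (\<lambda>t. \<Sum>j=1..k. P j t)"
    by (rule set_lebesgue_integral_cong) (auto simp: Rky_eq'')
  also have "\<dots> = (\<Sum>j=1..k. set_lebesgue_integral lborel {0..} (P j))"
    unfolding set_lebesgue_integral_def scaleR_sum_right
    by (rule Bochner_Integration.integral_sum) (use Pi in \<open>simp add: set_integrable_def\<close>)
  also have "\<dots> = (1 + LR) * (of_real lam * (\<Sum>j=1..k. Y j))"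
    by (simp add: PI sum_distrib_left algebra_simps)
  finally have LK: "set_lebesgue_integral lborel {0..} (\<lambda>\<tau>. exp (- s * of_real \<tau>) * of_real (Rky lam R k y \<tau>)) = (1 + LR) * (of_real lam * (\<Sum>j=1..k. Y j))" .
  have "(1 - of_real (lam * mu) * LT) * set_lebesgue_integral lborel {0..} (\<lambda>\<tau>. exp (- s * of_real \<tau>) * of_real (Rky lam R k y \<tau>))
       = ((1 + LR) * (1 - of_real (lam * mu) * LT)) * (of_real lam * (\<Sum>j=1..k. Y j))"
    unfolding LK by (simp add: mult_ac)
  also have "\<dots> = of_real lam * (\<Sum>j=1..k. Y j)" using key by simp
  finally show "(1 - of_real (lam * mu) * set_lebesgue_integral lborel {0..} (\<lambda>t. exp (- s * of_real t) * of_real (tail M t)))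
          * set_lebesgue_integral lborel {0..} (\<lambda>\<tau>. exp (- s * of_real \<tau>) * of_real (Rky lam R k y \<tau>))
         = of_real lam * (\<Sum>j=1..k. set_lebesgue_integral lborel {0..} (\<lambda>t. exp (- s * of_real t) * of_real (if y j > t then 1 else 0)))"
    by (simp add: LT_def T_def Y_def g_def)
qed



lemma subst_gamma:
  fixes G :: "real \<Rightarrow> real" and g \<beta> u :: real
  assumes g: "0 < g"
  shows "set_lebesgue_integral lborel {0..} (\<lambda>t. exp (\<i> * complex_of_real (u * t)) * complex_of_real (exp (- \<beta> * (g * t) / g) * G (g * t)))
       = (1 / of_real g) * set_lebesgue_integral lborel {0..} (\<lambda>\<tau>. exp (- ((of_real \<beta> - \<i> * of_real u) / of_real g) * of_real \<tau>) * of_real (G \<tau>))"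
proof -
  define f where "f \<tau> = indicator {0..} \<tau> *\<^sub>R (exp (- ((of_real \<beta> - \<i> * of_real u) / of_real g) * of_real \<tau>) * complex_of_real (G \<tau>))" for \<tau>
  have "(\<integral>\<tau>. f \<tau> \<partial>lborel) = \<bar>g\<bar> *\<^sub>R (\<integral>x. f (0 + g * x) \<partial>lborel)"
    by (rule lborel_integral_real_affine) (use g in auto)
  also have "(\<lambda>x. f (0 + g * x)) = (\<lambda>t. indicator {0..} t *\<^sub>R (exp (\<i> * complex_of_real (u * t)) * complex_of_real (exp (- \<beta> * (g * t) / g) * G (g * t))))"
  proof
    fix t :: real
    have i: "indicator {0..} (g * t) = (indicator {0..} t :: real)" using g by (simp add: indicator_def zero_le_mult_iff)
    have e: "exp (- ((of_real \<beta> - \<i> * of_real u) / of_real g) * of_real (g * t)) = exp (\<i> * complex_of_real (u * t)) * complex_of_real (exp (- \<beta> * (g * t) / g))"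
    proof -
      have ge: "complex_of_real g \<noteq> 0" using g by simp
      have arg: "- ((of_real \<beta> - \<i> * of_real u) / of_real g) * of_real (g * t) = \<i> * complex_of_real (u * t) + complex_of_real (- \<beta> * (g * t) / g)"
        using ge g by (simp add: field_simps)
      show ?thesis by (simp only: arg exp_add exp_of_real)
    qed
    show "f (0 + g * t) = indicator {0..} t *\<^sub>R (exp (\<i> * complex_of_real (u * t)) * complex_of_real (exp (- \<beta> * (g * t) / g) * G (g * t)))"
      unfolding f_def add_0_left i e by (simp add: mult_ac)
  qed
  finally show ?thesis using g by (simp add: set_lebesgue_integral_def f_def[abs_def] scaleR_conv_of_real)
qed


lemma Y_lim:
  fixes s :: "nat \<Rightarrow> complex" and yj :: real
  assumes s: "s \<longlonglongrightarrow> 0" and sr: "\<And>n. 0 \<le> Re (s n)" and y: "0 \<le> yj"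
  shows "(\<lambda>n. set_lebesgue_integral lborel {0..} (\<lambda>t. exp (- s n * of_real t) * of_real (if yj > t then 1 else 0))) \<longlonglongrightarrow> of_real yj"
proof -
  define g where "g t = (if yj > t then 1 else (0::real))" for t
  have gm[measurable]: "g \<in> borel_measurable borel" unfolding g_def by measurable
  have "(\<lambda>n. \<integral>t. indicator {0..} t *\<^sub>R (exp (- s n * of_real t) * of_real (g t)) \<partial>lborel) \<longlonglongrightarrow> (\<integral>t. indicator {0..} t *\<^sub>R (1 * of_real (g t)) \<partial>lborel)"
  proof (rule integral_dominated_convergence[where w="\<lambda>t. indicator {0..yj} t *\<^sub>R (1::real)"])
    show "(\<lambda>t. indicator {0..} t *\<^sub>R (1 * complex_of_real (g t))) \<in> borel_measurable lborel" by measurable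
    show "\<And>n. (\<lambda>t. indicator {0..} t *\<^sub>R (exp (- s n * of_real t) * of_real (g t))) \<in> borel_measurable lborel" by measurable
    show "integrable lborel (\<lambda>t. indicator {0..yj} t *\<^sub>R (1::real))"
      by (rule borel_integrable_compact) auto
    show "AE t in lborel. (\<lambda>n. indicator {0..} t *\<^sub>R (exp (- s n * of_real t) * of_real (g t))) \<longlonglongrightarrow> indicator {0..} t *\<^sub>R (1 * complex_of_real (g t))"
    proof (intro AE_I2)
      fix t :: real
      have "(\<lambda>n. exp (- s n * of_real t)) \<longlonglongrightarrow> exp (- 0 * of_real t)"
        by (intro tendsto_intros s)
      then show "(\<lambda>n. indicator {0..} t *\<^sub>R (exp (- s n * of_real t) * of_real (g t))) \<longlonglongrightarrow> indicator {0..} t *\<^sub>R (1 * complex_of_real (g t))"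
        by (intro tendsto_intros) simp
    qed
    show "\<And>n. AE t in lborel. norm (indicator {0..} t *\<^sub>R (exp (- s n * of_real t) * of_real (g t))) \<le> indicator {0..yj} t *\<^sub>R (1::real)"
    proof (intro AE_I2)
      fix n and t :: real
      show "norm (indicator {0..} t *\<^sub>R (exp (- s n * of_real t) * of_real (g t))) \<le> indicator {0..yj} t *\<^sub>R (1::real)"
      proof (cases "0 \<le> t \<and> t < yj")
        case True
        have "exp (- (Re (s n) * t)) \<le> 1" using sr[of n] True by auto
        then show ?thesis using True by (simp add: g_def indicator_def norm_mult norm_exp_eq_Re)
      qed (auto simp: g_def indicator_def)
    qed
  qed
  moreover have "(\<integral>t. indicator {0..} t *\<^sub>R (1 * complex_of_real (g t)) \<partial>lborel) = of_real yj"
  proof -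
    have "(\<lambda>t. indicator {0..} t *\<^sub>R (1 * complex_of_real (g t))) = (\<lambda>t. complex_of_real (indicator {0..<yj} t))"
      by (auto simp: fun_eq_iff indicator_def g_def)
    then show ?thesis using y by simp
  qed
  ultimately show ?thesis by (simp add: set_lebesgue_integral_def g_def)
qed

lemma laplace_rhs:
  fixes C u sig :: real assumes C: "0 < C"
  shows "set_lebesgue_integral lborel {0..} (\<lambda>t. exp (\<i> * complex_of_real (u * t)) * complex_of_real ((1 / sig) * exp (- C * t)))
       = of_real (1 / sig) * (1 / (of_real C - \<i> * of_real u))"
proof -
  define z where "z = of_real C - \<i> * of_real u"
  have z: "0 < Re z" using C by (simp add: z_def)
  have "(\<lambda>t. exp (\<i> * complex_of_real (u * t)) * complex_of_real ((1 / sig) * exp (- C * t))) = (\<lambda>t. of_real (1 / sig) * exp (- z * of_real t))"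
  proof
    fix t :: real
    have arg: "- z * of_real t = \<i> * complex_of_real (u * t) + complex_of_real (- C * t)" by (simp add: z_def algebra_simps)
    show "exp (\<i> * complex_of_real (u * t)) * complex_of_real ((1 / sig) * exp (- C * t)) = of_real (1 / sig) * exp (- z * of_real t)"
      by (simp only: arg exp_add exp_of_real[symmetric] of_real_mult) (simp add: mult_ac)
  qed
  then show ?thesis using laplace_exp(2)[OF z] by (simp add: z_def)
qed



lemma err_to_zero:
  fixes M :: "real measure" and g :: "nat \<Rightarrow> real" and c :: real
  assumes Mp: "prob_space M" and Ms: "sets M = sets borel" and M0: "measure M {..<0} = 0"
    and i1: "integrable M (\<lambda>x. x)" and i2: "integrable M (\<lambda>x. x ^ 2)"
    and g1: "\<And>n. 1 \<le> g n" and g: "filterlim g at_top sequentially" and c: "0 \<le> c"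
  shows "(\<lambda>n. set_lebesgue_integral lborel {0..} (\<lambda>t. min (c^2 * t^2 / g n) (2 * c * t) * tail M t)) \<longlonglongrightarrow> 0"
proof -
  note tb = tail_basic[OF Mp Ms]
  note tmo = tail_moments[OF Mp Ms M0 i1 i2]
  have [measurable]: "tail M \<in> borel_measurable borel" by (rule tb(1))
  define S where "S n t = indicator {0..} t * (min (c^2 * t^2 / g n) (2 * c * t) * tail M t)" for n t
  define W where "W t = 2 * c * (indicator {0..} t * (t * tail M t))" for t
  define F where "F (t::real) = (0::real)" for t
  have Fm: "F \<in> borel_measurable lborel" unfolding F_def[abs_def] by simp
  have Sm: "\<And>n. S n \<in> borel_measurable lborel" unfolding S_def by measurable
  have Wi: "integrable lborel W"
    using tmo(3) unfolding set_integrable_def W_def by (intro integrable_mult_right) simp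
  have lim: "AE t in lborel. (\<lambda>n. S n t) \<longlonglongrightarrow> F t"
  proof (intro AE_I2)
    fix t :: real
    show "(\<lambda>n. S n t) \<longlonglongrightarrow> F t"
    proof (cases "0 \<le> t")
      case True
      have gi: "(\<lambda>n. inverse (g n)) \<longlonglongrightarrow> 0" by (rule tendsto_inverse_0_at_top[OF g])
      have up: "(\<lambda>n. c^2 * t^2 * inverse (g n)) \<longlonglongrightarrow> 0"
        using tendsto_mult[OF tendsto_const gi, of "c^2 * t^2"] by simp
      have "(\<lambda>n. min (c^2 * t^2 / g n) (2 * c * t)) \<longlonglongrightarrow> 0"
      proof (rule tendsto_sandwich[OF _ _ tendsto_const up])
        show "\<forall>\<^sub>F n in sequentially. 0 \<le> min (c^2 * t^2 / g n) (2 * c * t)"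
        proof (intro always_eventually allI)
          fix n have "0 < g n" using g1[of n] by linarith
          then show "0 \<le> min (c^2 * t^2 / g n) (2 * c * t)" using True c by auto
        qed
        show "\<forall>\<^sub>F n in sequentially. min (c^2 * t^2 / g n) (2 * c * t) \<le> c^2 * t^2 * inverse (g n)"
          by (intro always_eventually allI) (simp add: divide_inverse)
      qed
      then have "(\<lambda>n. min (c^2 * t^2 / g n) (2 * c * t) * tail M t) \<longlonglongrightarrow> 0 * tail M t"
        by (intro tendsto_intros)
      then show ?thesis using True by (simp add: S_def F_def indicator_def)
    qed (simp add: S_def F_def indicator_def)
  qed
  have bnd: "\<And>n. AE t in lborel. norm (S n t) \<le> W t"
  proof (intro AE_I2)
    fix n and t :: real
    show "norm (S n t) \<le> W t"
    proof (cases "0 \<le> t")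
      case True
      have gp: "0 < g n" using g1[of n] by linarith
      have m0: "0 \<le> min (c^2 * t^2 / g n) (2 * c * t)" using True c gp by auto
      have "min (c^2 * t^2 / g n) (2 * c * t) * tail M t \<le> (2 * c * t) * tail M t"
        by (rule mult_right_mono) (simp_all add: tb(2))
      then show ?thesis using True m0 tb(2)[of t] by (simp add: S_def W_def indicator_def abs_mult mult_ac)
    qed (simp add: S_def W_def indicator_def)
  qed
  have "(\<lambda>n. integral\<^sup>L lborel (S n)) \<longlonglongrightarrow> integral\<^sup>L lborel F"
    by (rule integral_dominated_convergence[OF Fm Sm Wi lim bnd])
  then show ?thesis by (simp add: set_lebesgue_integral_def S_def[abs_def] F_def[abs_def])
qed


lemma powr_moments:
  fixes M :: "real measure" and \<alpha> :: real
  assumes Mp: "prob_space M" and Ms: "sets M = sets borel" and a: "1 < \<alpha>"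
    and ip: "integrable M (\<lambda>t. \<bar>t\<bar> powr (2 * \<alpha>))"
  shows "integrable M (\<lambda>x. x ^ 2)" "integrable M (\<lambda>x. x)"
proof -
  interpret prob_space M by (rule Mp)
  have m2: "(\<lambda>x::real. x ^ 2) \<in> borel_measurable M" unfolding measurable_cong_sets[OF Ms refl] by simp
  have m1: "(\<lambda>x::real. x) \<in> borel_measurable M" unfolding measurable_cong_sets[OF Ms refl] by simp
  have bnd: "x ^ 2 \<le> 1 + \<bar>x\<bar> powr (2 * \<alpha>)" for x :: real
  proof (cases "\<bar>x\<bar> \<le> 1")
    case True
    have "\<bar>x\<bar> ^ 2 \<le> 1" using True by (intro power_le_one) auto
    then have "x ^ 2 \<le> 1" by simp
    moreover have "0 \<le> \<bar>x\<bar> powr (2 * \<alpha>)" by simp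
    ultimately show ?thesis by linarith
  next
    case False
    have "\<bar>x\<bar> powr 2 = \<bar>x\<bar> ^ 2" using False by (subst powr_numeral) auto
    then have "x ^ 2 = \<bar>x\<bar> powr 2" by simp
    also have "\<dots> \<le> \<bar>x\<bar> powr (2 * \<alpha>)" using False a by (intro powr_mono) auto
    finally show ?thesis by simp
  qed
  have i2: "integrable M (\<lambda>x. 1 + \<bar>x\<bar> powr (2 * \<alpha>))"
    by (intro Bochner_Integration.integrable_add integrable_const ip)
  show x2: "integrable M (\<lambda>x. x ^ 2)"
  proof (rule Bochner_Integration.integrable_bound[OF i2 m2])
    show "AE x in M. norm (x ^ 2) \<le> norm (1 + \<bar>x\<bar> powr (2 * \<alpha>))"
    proof (intro AE_I2)
      fix x :: real
      have "0 \<le> 1 + \<bar>x\<bar> powr (2 * \<alpha>)" by (simp add: add_nonneg_nonneg)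
      then show "norm (x ^ 2) \<le> norm (1 + \<bar>x\<bar> powr (2 * \<alpha>))" using bnd[of x] by simp
    qed
  qed
  have i3: "integrable M (\<lambda>x. 1 + x ^ 2)"
    by (intro Bochner_Integration.integrable_add integrable_const x2)
  show "integrable M (\<lambda>x. x)"
  proof (rule Bochner_Integration.integrable_bound[OF i3 m1])
    show "AE x in M. norm x \<le> norm (1 + x ^ 2)"
    proof (intro AE_I2)
      fix x :: real
      have "\<bar>x\<bar> \<le> 1 + x ^ 2"
      proof (cases "\<bar>x\<bar> \<le> 1")
        case True
        moreover have "0 \<le> x ^ 2" by simp
        ultimately show ?thesis by linarith
      next
        case False
        then have "\<bar>x\<bar> * 1 \<le> \<bar>x\<bar> * \<bar>x\<bar>" by (intro mult_left_mono) auto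
        also have "\<dots> = x ^ 2" by (simp add: power2_eq_square)
        finally show ?thesis by simp
      qed
      moreover have "0 \<le> 1 + x ^ 2" by (simp add: add_nonneg_nonneg)
      ultimately show "norm x \<le> norm (1 + x ^ 2)" by simp
    qed
  qed
qed



theorem lemma5p7:
  fixes lamn :: "nat \<Rightarrow> real" and Lam :: "nat \<Rightarrow> real measure"
    and p q :: "nat \<Rightarrow> nat \<Rightarrow> real" and gam :: "nat \<Rightarrow> real"
    and gstar lam eta sig b beta u :: real
    and psi phi :: "real \<Rightarrow> real"
    and R :: "nat \<Rightarrow> real \<Rightarrow> real"
    and k :: nat and y :: "nat \<Rightarrow> real"
  defines "etan \<equiv> (\<lambda>n. integral\<^sup>L (Lam n) (\<lambda>x. x))"
    and "sigman \<equiv> (\<lambda>n. (1/2) * integral\<^sup>L (Lam n) (\<lambda>x. x ^ 2))"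
    and "mn \<equiv> (\<lambda>n. mean_Z (p n))"
    and "m \<equiv> lim (\<lambda>n. gam n * (1 - mean_Z (p n)))"
  assumes lam_pos: "\<forall>n\<ge>1. lamn n > 0"
    and Lam_prob: "\<forall>n\<ge>1. prob_space (Lam n) \<and> sets (Lam n) = sets borel
                     \<and> measure (Lam n) {..<0} = 0"
    and Lam_mom: "\<forall>n\<ge>1. integrable (Lam n) (\<lambda>x. x) \<and> integrable (Lam n) (\<lambda>x. x ^ 2)"
    and p_law: "\<forall>n\<ge>1. prob_law_Zplus (p n) \<and> summable (\<lambda>k. real k * p n k)"
    and q_law: "\<forall>n\<ge>1. prob_law_Zplus (q n)"
    and gam_pos: "\<forall>n\<ge>1. gam n > 0"
    and gam_inf: "filterlim gam at_top sequentially"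
    and gam_lin: "(\<lambda>n. gam n / real n) \<longlonglongrightarrow> gstar" and gstar: "gstar \<ge> 0"
    \<comment> \<open>Condition 1 (i)\<close>
    and C1_lam: "lamn \<longlonglongrightarrow> lam" "lam > 0"
    and C1_eta: "etan \<longlonglongrightarrow> eta" "eta > 0"
    and C1_sig: "sigman \<longlonglongrightarrow> sig" "sig > 0"
    and C1_b: "(\<lambda>n. gam n * (1 - lamn n * etan n)) \<longlonglongrightarrow> b"
    \<comment> \<open>Condition 1 (ii)\<close>
    and C1_psi: "\<forall>T. uniform_limit {0..T} (\<lambda>n. psi_n n (gam n) (q n)) psi sequentially"
    \<comment> \<open>Condition 1 (iii)\<close>
    and C1_phi_lip: "\<forall>T. \<exists>L. \<forall>n\<ge>1. L-lipschitz_on {0..min T (real n)} (phi_n n (gam n) (p n))"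
    and C1_phi_lim: "\<forall>T. uniform_limit {0..T} (\<lambda>n. phi_n n (gam n) (p n)) phi sequentially"
    and C1_phi_cont: "continuous_on {0..} phi"
    \<comment> \<open>Condition 2, for some \<open>\<alpha> \<in> (1,2)\<close>\<close>
    and C2: "\<exists>\<alpha>. 1 < \<alpha> \<and> \<alpha> < 2 \<and>
       (\<exists>C k0. C > 0 \<and> k0 > (0::nat) \<and>
          (\<forall>n\<ge>1. summable (\<lambda>k. if k \<ge> k0 then (real k / real n) powr \<alpha> * p n k else 0)
                 \<and> summable (\<lambda>k. real k powr \<alpha> * q n k)
                 \<and> real n * gam n * (\<Sum>k. if k \<ge> k0 then (real k / real n) powr \<alpha> * p n k else 0)
                     + (\<Sum>k. real k powr \<alpha> * q n k) \<le> C)) \<and>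
       ((\<lambda>k1. limsup (\<lambda>n. ereal (gam n * (\<Sum>k. if k \<ge> k1 then real k * p n k else 0))))
          \<longlonglongrightarrow> 0) \<and>
       (\<exists>C0 Ls. C0 > 0 \<and> prob_space Ls \<and> sets Ls = sets borel \<and> measure Ls {..<0} = 0
          \<and> integrable Ls (\<lambda>t. \<bar>t\<bar> powr (2 * \<alpha>))
          \<and> (\<forall>n\<ge>1. \<forall>t\<ge>0. tail (Lam n) t \<le> C0 * tail Ls t))"
    and beta: "beta \<ge> 0" "beta > - (b + m) / (sig * lam)"
    \<comment> \<open>\<open>R\<^sup>(\<^sup>n\<^sup>)\<close>: the locally integrable solution of the renewal equation\<close>
    and R_loc: "\<forall>n\<ge>1. \<forall>T. set_integrable lborel {0..T} (R n)"
    and R_eq: "\<forall>n\<ge>1. \<forall>t\<ge>0. R n t = lamn n * mn n * tail (Lam n) t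
                 + lamn n * mn n * set_lebesgue_integral lborel {0..t} (\<lambda>s. R n (t - s) * tail (Lam n) s)"
    and k_pos: "k \<ge> 1" and y_nonneg: "\<forall>j\<in>{1..k}. y j \<ge> 0"
  shows "(\<lambda>n. set_lebesgue_integral lborel {0..}
            (\<lambda>t. exp (\<i> * complex_of_real (u * t))
                 * complex_of_real (Rky_beta beta (gam n) (lamn n) (R n) k y (gam n * t))))
         \<longlonglongrightarrow> complex_of_real (\<Sum>j=1..k. y j)
             * set_lebesgue_integral lborel {0..}
                 (\<lambda>t. exp (\<i> * complex_of_real (u * t))
                      * complex_of_real ((1 / sig) * exp (- ((b + m) / (sig * lam) + beta) * t)))"
proof -
  have gpos: "eventually (\<lambda>n. 0 < gam n \<and> 1 \<le> n) sequentially"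
  proof -
    have "eventually (\<lambda>n. 1 \<le> n) sequentially" by (auto simp: eventually_sequentially)
    moreover have "eventually (\<lambda>n. 0 < gam n) sequentially"
      using gam_inf by (simp add: filterlim_at_top_dense)
    ultimately show ?thesis by eventually_elim auto
  qed
  have gam1: "eventually (\<lambda>n. 1 \<le> gam n) sequentially"
    using gam_inf by (simp add: filterlim_at_top)
  have invg: "(\<lambda>n. 1 / gam n) \<longlonglongrightarrow> 0"
    using tendsto_inverse_0_at_top[OF gam_inf] by (simp add: divide_inverse)
  obtain \<alpha> C0 Ls where a1: "1 < \<alpha>"
    and tailc: "(\<lambda>k1. limsup (\<lambda>n. ereal (gam n * (\<Sum>k. if k \<ge> k1 then real k * p n k else 0)))) \<longlonglongrightarrow> 0"
    and C0: "C0 > 0" and Lsp: "prob_space Ls" and Lss: "sets Ls = sets borel" and Ls0: "measure Ls {..<0} = 0"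
    and Lsi: "integrable Ls (\<lambda>t. \<bar>t\<bar> powr (2 * \<alpha>))"
    and dom: "\<forall>n\<ge>1. \<forall>t\<ge>0. tail (Lam n) t \<le> C0 * tail Ls t"
    using C2 by blast
  note Lsm = powr_moments[OF Lsp Lss a1 Lsi]
  have mconv: "(\<lambda>n. gam n * (1 - mean_Z (p n))) \<longlonglongrightarrow> m"
  proof -
    have "convergent (\<lambda>n. gam n * (1 - mean_Z (p n)))"
      by (rule m_conv[OF p_law gam_pos gam_lin C1_phi_lim tailc])
    then show ?thesis unfolding m_def by (simp add: convergent_LIMSEQ_iff)
  qed
  have mn_eq: "mn n = mean_Z (p n)" for n by (simp add: mn_def)
  have one_lim: "(\<lambda>n. x n) \<longlonglongrightarrow> 1" if "(\<lambda>n. gam n * (1 - x n)) \<longlonglongrightarrow> L" for x :: "nat \<Rightarrow> real" and L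
  proof -
    have "(\<lambda>n. (gam n * (1 - x n)) * (1 / gam n)) \<longlonglongrightarrow> L * 0" by (intro tendsto_mult that invg)
    moreover have "eventually (\<lambda>n. (gam n * (1 - x n)) * (1 / gam n) = 1 - x n) sequentially"
      using gpos by eventually_elim simp
    ultimately have "(\<lambda>n. 1 - x n) \<longlonglongrightarrow> 0" by (simp add: tendsto_cong)
    then have "(\<lambda>n. 1 - (1 - x n)) \<longlonglongrightarrow> 1 - 0" by (intro tendsto_intros)
    then show ?thesis by simp
  qed
  have lamneta: "(\<lambda>n. lamn n * etan n) \<longlonglongrightarrow> 1" by (rule one_lim[OF C1_b])
  have le1: "lam * eta = 1"
    using LIMSEQ_unique[OF tendsto_mult[OF C1_lam(1) C1_eta(1)] lamneta] .
  have mu1: "(\<lambda>n. mn n) \<longlonglongrightarrow> 1" unfolding mn_eq by (rule one_lim[OF mconv])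
  have bm: "(\<lambda>n. gam n * (1 - lamn n * mn n * etan n)) \<longlonglongrightarrow> b + m"
  proof -
    have "(\<lambda>n. gam n * (1 - lamn n * etan n) + lamn n * etan n * (gam n * (1 - mean_Z (p n)))) \<longlonglongrightarrow> b + 1 * m"
      by (intro tendsto_intros C1_b lamneta mconv)
    then show ?thesis by (simp add: mn_eq algebra_simps)
  qed
  have lmu: "(\<lambda>n. lamn n * mn n) \<longlonglongrightarrow> lam"
    using tendsto_mult[OF C1_lam(1) mu1] by simp
  have lms: "(\<lambda>n. lamn n * mn n * sigman n) \<longlonglongrightarrow> lam * sig"
    using tendsto_mult[OF lmu C1_sig(1)] by simp
  have Lp: "prob_space (Lam n)" "sets (Lam n) = sets borel" "measure (Lam n) {..<0} = 0"
    "integrable (Lam n) (\<lambda>x. x)" "integrable (Lam n) (\<lambda>x. x ^ 2)" if "1 \<le> n" for n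
    using Lam_prob Lam_mom that by auto
  define LT where "LT n (s::complex) = set_lebesgue_integral lborel {0..} (\<lambda>t. exp (- s * of_real t) * of_real (tail (Lam n) t))" for n s
  define Dn where "Dn (s0::complex) n = of_real (gam n) * (1 - of_real (lamn n * mn n) * LT n (s0 / of_real (gam n)))" for s0 n
  define G where "G n = max 1 (gam n)" for n
  have G1: "1 \<le> G n" for n by (simp add: G_def)
  have Ginf: "filterlim G at_top sequentially"
    by (rule filterlim_at_top_mono[OF gam_inf]) (simp add: G_def)
  have Geq: "eventually (\<lambda>n. G n = gam n) sequentially" using gam1 by eventually_elim (simp add: G_def)
  have Dlim: "(\<lambda>n. Dn s0 n) \<longlonglongrightarrow> of_real (b + m) + of_real (lam * sig) * s0" if s0: "0 \<le> Re s0" for s0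
  proof -
    define c where "c = norm s0"
    have c0: "0 \<le> c" by (simp add: c_def)
    define I2 where "I2 n = set_lebesgue_integral lborel {0..} (\<lambda>t. min (c^2 * t^2 / G n) (2 * c * t) * tail Ls t)" for n
    have EZ: "(\<lambda>n. C0 * I2 n) \<longlonglongrightarrow> 0"
      using tendsto_mult[OF tendsto_const err_to_zero[OF Lsp Lss Ls0 Lsm(2) Lsm(1) G1 Ginf c0], of C0]
      by (simp add: I2_def)
    define E where "E n = LT n (s0 / of_real (gam n)) - (of_real (etan n) - (s0 / of_real (gam n)) * of_real (sigman n))" for n
    have Eb: "eventually (\<lambda>n. norm (of_real (gam n) * E n) \<le> C0 * I2 n) sequentially"
      using gpos gam1
    proof eventually_elim
      case (elim n)
      then have n1: "1 \<le> n" and g: "1 \<le> gam n" by auto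
      have gp: "0 < gam n" using g by simp
      define sn where "sn = s0 / of_real (gam n)"
      have sn: "0 \<le> Re sn" using s0 gp by (simp add: sn_def Re_divide_of_real)
      have nsn: "norm sn = c / gam n" using gp by (simp add: sn_def c_def norm_divide)
      note lt = laplace_tail[OF Lp[OF n1] sn]
      note ltL = laplace_tail[OF Lsp Lss Ls0 Lsm(2) Lsm(1) sn]
      have "norm (E n) \<le> set_lebesgue_integral lborel {0..} (\<lambda>t. min ((norm sn * t)^2) (2 * (norm sn * t)) * tail (Lam n) t)"
        using lt(3) by (simp add: E_def LT_def sn_def etan_def sigman_def)
      also have "\<dots> \<le> set_lebesgue_integral lborel {0..} (\<lambda>t. C0 * (min ((norm sn * t)^2) (2 * (norm sn * t)) * tail Ls t))"
      proof (rule set_integral_mono)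
        show "set_integrable lborel {0..} (\<lambda>t. min ((norm sn * t)^2) (2 * (norm sn * t)) * tail (Lam n) t)" by (rule lt(2))
        show "set_integrable lborel {0..} (\<lambda>t. C0 * (min ((norm sn * t)^2) (2 * (norm sn * t)) * tail Ls t))"
          using ltL(2) by (rule set_integrable_mult_right)
        fix t :: real assume t: "t \<in> {0..}"
        have m0: "0 \<le> min ((norm sn * t)^2) (2 * (norm sn * t))" using t by simp
        have "tail (Lam n) t \<le> C0 * tail Ls t" using dom n1 t by auto
        then have "min ((norm sn * t)^2) (2 * (norm sn * t)) * tail (Lam n) t \<le> min ((norm sn * t)^2) (2 * (norm sn * t)) * (C0 * tail Ls t)"
          using m0 by (rule mult_left_mono)
        then show "min ((norm sn * t)^2) (2 * (norm sn * t)) * tail (Lam n) t \<le> C0 * (min ((norm sn * t)^2) (2 * (norm sn * t)) * tail Ls t)"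
          by (simp add: mult_ac)
      qed
      also have "\<dots> = C0 * set_lebesgue_integral lborel {0..} (\<lambda>t. min ((norm sn * t)^2) (2 * (norm sn * t)) * tail Ls t)"
        by simp
      finally have En: "norm (E n) \<le> C0 * set_lebesgue_integral lborel {0..} (\<lambda>t. min ((norm sn * t)^2) (2 * (norm sn * t)) * tail Ls t)" .
      have "gam n * set_lebesgue_integral lborel {0..} (\<lambda>t. min ((norm sn * t)^2) (2 * (norm sn * t)) * tail Ls t)
          = set_lebesgue_integral lborel {0..} (\<lambda>t. gam n * (min ((norm sn * t)^2) (2 * (norm sn * t)) * tail Ls t))"
        by simp
      also have "\<dots> = I2 n"
        unfolding I2_def
      proof (rule set_lebesgue_integral_cong)
        show "\<forall>t. t \<in> {0..} \<longrightarrow> gam n * (min ((norm sn * t)^2) (2 * (norm sn * t)) * tail Ls t) = min (c^2 * t^2 / G n) (2 * c * t) * tail Ls t"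
        proof (intro allI impI)
          fix t :: real assume t: "t \<in> {0..}"
          have Gn: "G n = gam n" using g by (simp add: G_def)
          have "gam n * min ((norm sn * t)^2) (2 * (norm sn * t)) = min (gam n * (norm sn * t)^2) (gam n * (2 * (norm sn * t)))"
            using gp by (simp add: min_mult_distrib_left)
          also have "\<dots> = min (c^2 * t^2 / G n) (2 * c * t)"
            using gp by (simp add: nsn Gn power2_eq_square field_simps)
          finally show "gam n * (min ((norm sn * t)^2) (2 * (norm sn * t)) * tail Ls t) = min (c^2 * t^2 / G n) (2 * c * t) * tail Ls t"
            by (simp add: mult.assoc[symmetric])
        qed
      qed simp
      finally have gI: "gam n * set_lebesgue_integral lborel {0..} (\<lambda>t. min ((norm sn * t)^2) (2 * (norm sn * t)) * tail Ls t) = I2 n" .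
      have "norm (of_real (gam n) * E n) = gam n * norm (E n)" using gp by (simp add: norm_mult)
      also have "\<dots> \<le> gam n * (C0 * set_lebesgue_integral lborel {0..} (\<lambda>t. min ((norm sn * t)^2) (2 * (norm sn * t)) * tail Ls t))"
        using En gp by (intro mult_left_mono) auto
      also have "\<dots> = C0 * I2 n" using gI by (simp add: mult_ac)
      finally show ?case .
    qed
    have gE: "(\<lambda>n. of_real (gam n) * E n) \<longlonglongrightarrow> 0"
      by (rule Lim_null_comparison[OF Eb EZ])
    have Dq: "eventually (\<lambda>n. Dn s0 n = of_real (gam n * (1 - lamn n * mn n * etan n)) + of_real (lamn n * mn n * sigman n) * s0
               - of_real (lamn n * mn n) * (of_real (gam n) * E n)) sequentially"
      using gpos
    proof eventually_elim
      case (elim n)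
      then have gz: "complex_of_real (gam n) \<noteq> 0" by simp
      show ?case unfolding Dn_def E_def using gz by (simp add: field_simps)
    qed
    have "(\<lambda>n. of_real (gam n * (1 - lamn n * mn n * etan n)) + of_real (lamn n * mn n * sigman n) * s0
               - of_real (lamn n * mn n) * (of_real (gam n) * E n)) \<longlonglongrightarrow> of_real (b + m) + of_real (lam * sig) * s0 - of_real lam * 0"
      by (intro tendsto_intros bm lms lmu gE)
    then show ?thesis using Dq by (simp add: tendsto_cong)
  qed
  have slpos: "0 < sig * lam" using C1_sig(2) C1_lam(2) by simp
  have pos: "0 < b + m + lam * sig * beta"
  proof -
    have "- (b + m) < beta * (sig * lam)" using beta(2) slpos by (simp add: divide_less_eq)
    then show ?thesis by (simp add: algebra_simps)
  qed
  have Kev: "eventually (\<lambda>n. lamn n * mn n * set_lebesgue_integral lborel {0..} (\<lambda>t. exp (- (beta / gam n) * t) * tail (Lam n) t) < 1) sequentially"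
  proof -
    have "(\<lambda>n. Re (Dn (of_real beta) n)) \<longlonglongrightarrow> Re (of_real (b + m) + of_real (lam * sig) * of_real beta)"
      by (intro tendsto_intros Dlim) (use beta(1) in simp)
    then have "eventually (\<lambda>n. 0 < Re (Dn (of_real beta) n)) sequentially"
      using pos by (intro order_tendstoD(1)) (auto simp: algebra_simps)
    then show ?thesis using gpos
    proof eventually_elim
      case (elim n)
      then have gp: "0 < gam n" by auto
      define K where "K = set_lebesgue_integral lborel {0..} (\<lambda>t. exp (- (beta / gam n) * t) * tail (Lam n) t)"
      have "LT n (of_real beta / of_real (gam n)) = of_real K"
      proof -
        have "(\<lambda>t. exp (- (of_real beta / of_real (gam n)) * of_real t) * of_real (tail (Lam n) t))
            = (\<lambda>t. complex_of_real (exp (- (beta / gam n) * t) * tail (Lam n) t))"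
          by (auto simp: fun_eq_iff exp_of_real[symmetric])
        then show ?thesis
          using set_integral_complex_of_real[of lborel "{0..}" "\<lambda>t. exp (- (beta / gam n) * t) * tail (Lam n) t"]
          unfolding LT_def K_def by simp
      qed
      then have "Re (Dn (of_real beta) n) = gam n * (1 - lamn n * mn n * K)"
        by (simp add: Dn_def)
      then have "0 < gam n * (1 - lamn n * mn n * K)" using elim by simp
      then show ?case using gp by (simp add: K_def zero_less_mult_iff)
    qed
  qed
  define s0 where "s0 = of_real beta - \<i> * of_real u"
  have s0r: "0 \<le> Re s0" using beta(1) by (simp add: s0_def)
  define D0 where "D0 = of_real (b + m) + of_real (lam * sig) * s0"
  have D0r: "Re D0 = b + m + lam * sig * beta" by (simp add: D0_def s0_def)
  have D0nz: "D0 \<noteq> 0" using D0r pos by auto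
  note DL = Dlim[OF s0r, folded D0_def]
  define Y where "Y n j = set_lebesgue_integral lborel {0..} (\<lambda>t. exp (- (s0 / of_real (G n)) * of_real t) * of_real (if y j > t then 1 else 0))" for n j
  have Ylim: "(\<lambda>n. Y n j) \<longlonglongrightarrow> of_real (y j)" if j: "j \<in> {1..k}" for j
    unfolding Y_def
  proof (rule Y_lim)
    have "(\<lambda>n. s0 * inverse (of_real (G n))) \<longlonglongrightarrow> s0 * 0"
    proof (intro tendsto_intros)
      have "(\<lambda>n. inverse (G n)) \<longlonglongrightarrow> 0" by (rule tendsto_inverse_0_at_top[OF Ginf])
      then have "(\<lambda>n. of_real (inverse (G n)) :: complex) \<longlonglongrightarrow> of_real 0" by (rule tendsto_of_real)
      then show "(\<lambda>n. inverse (of_real (G n)) :: complex) \<longlonglongrightarrow> 0" by simp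
    qed
    then show "(\<lambda>n. s0 / of_real (G n)) \<longlonglongrightarrow> 0" by (simp add: divide_inverse)
    show "\<And>n. 0 \<le> Re (s0 / complex_of_real (G n))"
      using s0r G1 by (simp add: Re_divide_of_real) (meson divide_nonneg_pos less_le_trans zero_less_one)
    show "0 \<le> y j" using y_nonneg j by auto
  qed
  have Qlim: "(\<lambda>n. of_real (lamn n) * (\<Sum>j=1..k. Y n j) / Dn s0 n) \<longlonglongrightarrow> of_real lam * (\<Sum>j=1..k. of_real (y j)) / D0"
    by (intro tendsto_intros C1_lam(1) DL D0nz Ylim) auto
  have Fev: "eventually (\<lambda>n. set_lebesgue_integral lborel {0..}
            (\<lambda>t. exp (\<i> * complex_of_real (u * t))
                 * complex_of_real (Rky_beta beta (gam n) (lamn n) (R n) k y (gam n * t)))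
         = of_real (lamn n) * (\<Sum>j=1..k. Y n j) / Dn s0 n) sequentially"
  proof -
    have Dne: "eventually (\<lambda>n. Dn s0 n \<noteq> 0) sequentially"
      by (rule tendsto_imp_eventually_ne[OF DL D0nz])
    show ?thesis using gpos Kev Geq Dne
    proof eventually_elim
      case (elim n)
      then have n1: "1 \<le> n" and gp: "0 < gam n" and Kn: "lamn n * mn n * set_lebesgue_integral lborel {0..} (\<lambda>t. exp (- (beta / gam n) * t) * tail (Lam n) t) < 1"
        and Gn: "G n = gam n" and Dnz: "Dn s0 n \<noteq> 0" by auto
      define sn where "sn = s0 / of_real (gam n)"
      have ReSn: "Re sn = beta / gam n" by (simp add: sn_def s0_def Re_divide_of_real)
      have sn: "0 \<le> Re sn" using ReSn beta(1) gp by simp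
      have lp: "0 < lamn n" using lam_pos n1 by auto
      have mu0: "0 \<le> mn n"
      proof -
        have "prob_law_Zplus (p n)" "summable (\<lambda>k. real k * p n k)" using p_law n1 by auto
        then show ?thesis unfolding mn_eq mean_Z_def prob_law_Zplus_def by (intro suminf_nonneg) auto
      qed
      have Rl: "\<And>T. set_integrable lborel {0..T} (R n)" using R_loc n1 by auto
      have Re': "\<And>t. 0 \<le> t \<Longrightarrow> R n t = lamn n * mn n * tail (Lam n) t + lamn n * mn n * set_lebesgue_integral lborel {0..t} (\<lambda>v. R n (t - v) * tail (Lam n) v)"
        using R_eq n1 by auto
      have K1: "lamn n * mn n * set_lebesgue_integral lborel {0..} (\<lambda>t. exp (- Re sn * t) * tail (Lam n) t) < 1"
        using Kn by (simp add: ReSn)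
      note RL = renewal_laplace[OF Lp[OF n1] lp mu0 sn Rl Re' K1, of k y]
      define L where "L = set_lebesgue_integral lborel {0..} (\<lambda>\<tau>. exp (- sn * of_real \<tau>) * of_real (Rky (lamn n) (R n) k y \<tau>))"
      have sub: "set_lebesgue_integral lborel {0..}
            (\<lambda>t. exp (\<i> * complex_of_real (u * t))
                 * complex_of_real (Rky_beta beta (gam n) (lamn n) (R n) k y (gam n * t))) = (1 / of_real (gam n)) * L"
        unfolding Rky_beta_def L_def sn_def s0_def by (rule subst_gamma[OF gp])
      have YY: "Y n j = set_lebesgue_integral lborel {0..} (\<lambda>t. exp (- sn * of_real t) * of_real (if y j > t then 1 else 0))" for j
        by (simp add: Y_def Gn sn_def)
      have key: "(1 - of_real (lamn n * mn n) * LT n sn) * L = of_real (lamn n) * (\<Sum>j=1..k. Y n j)"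
        using RL(2) unfolding YY L_def LT_def .
      have Dq: "Dn s0 n = of_real (gam n) * (1 - of_real (lamn n * mn n) * LT n sn)"
        by (simp add: Dn_def sn_def)
      have gz: "complex_of_real (gam n) \<noteq> 0" using gp by simp
      have "Dn s0 n * ((1 / of_real (gam n)) * L) = of_real (lamn n) * (\<Sum>j=1..k. Y n j)"
        unfolding Dq key[symmetric] using gz by (simp add: field_simps)
      then show ?case unfolding sub using Dnz by (simp add: field_simps)
    qed
  qed
  have "(\<lambda>n. set_lebesgue_integral lborel {0..}
            (\<lambda>t. exp (\<i> * complex_of_real (u * t))
                 * complex_of_real (Rky_beta beta (gam n) (lamn n) (R n) k y (gam n * t))))
         \<longlonglongrightarrow> of_real lam * (\<Sum>j=1..k. of_real (y j)) / D0"
    using Qlim Fev by (simp add: tendsto_cong)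
  moreover have "of_real lam * (\<Sum>j=1..k. of_real (y j)) / D0 = complex_of_real (\<Sum>j=1..k. y j)
             * set_lebesgue_integral lborel {0..}
                 (\<lambda>t. exp (\<i> * complex_of_real (u * t))
                      * complex_of_real ((1 / sig) * exp (- ((b + m) / (sig * lam) + beta) * t)))"
  proof -
    define C where "C = (b + m) / (sig * lam) + beta"
    have e: "- (b + m) / (sig * lam) = - ((b + m) / (sig * lam))" by (rule minus_divide_left[symmetric])
    have Cp: "0 < C" using beta(2) unfolding C_def e by linarith
    define Z where "Z = of_real C - \<i> * of_real u"
    have Zn: "Z \<noteq> 0" using Cp by (auto simp: Z_def complex_eq_iff)
    have I: "set_lebesgue_integral lborel {0..}
                 (\<lambda>t. exp (\<i> * complex_of_real (u * t))
                      * complex_of_real ((1 / sig) * exp (- ((b + m) / (sig * lam) + beta) * t)))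
          = of_real (1 / sig) * (1 / Z)"
      using laplace_rhs[OF Cp, of u sig] unfolding C_def Z_def .
    have l0: "complex_of_real lam \<noteq> 0" "complex_of_real sig \<noteq> 0" using C1_lam(2) C1_sig(2) by auto
    have Dz: "D0 = of_real (lam * sig) * Z"
      using l0 by (simp add: D0_def s0_def C_def Z_def field_simps)
    have S: "(\<Sum>j=1..k. complex_of_real (y j)) = complex_of_real (\<Sum>j=1..k. y j)" by simp
    show ?thesis unfolding I Dz S using l0 Zn by (simp add: field_simps)
  qed
  ultimately show ?thesis by simp
qed


end
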